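(* Let $b,c,d\in\mathbb{F}_q[T]$ be distinct polynomials with $\deg_T b,\deg_T c,\deg_T d\ge1$. Let $n,m,\ell\ge1$ be integers and $a_1,\dots,a_{n-1}\in\mathbb{F}_q[T]$ with $\deg_T a_i\ge1$ for all $1\le i\le n-1$. Put \[ \alpha_1:=[0,a_1,\dots,a_{n-1},c,\overline{b}],\quad \alpha_2:=[0,a_1,\dots,a_{n-1},c,\overline{b^{[m]},d}], \] \[ \alpha_3:=[0,a_1,\dots,a_{n-1},c,\overline{b^{[m]},c,b^{[\ell]}}],\quad \alpha_4:=[0,a_1,\dots,a_{n-1},c,\overline{(b,d)^{[m]},c,(b,d)^{[\ell]}}], \] and let $(p_{i,k}/q_{i,k})_{k\ge0}$ be the convergent sequence of $\alpha_i$ for $i=1,2,3,4$. Then \[ H(\alpha_1)\asymp_{b,c}|q_{1,n}|^2,\quad H(\alpha_2)\asymp_{b,c,d}|q_{2,n}q_{2,n+m+1}|, \] \[ H(\alpha_3)\asymp_{b,c}|q_{3,n}q_{3,n+m+\ell+1}|,\quad H(\alpha_4)\asymp_{b,c,d}|q_{4,n}q_{4,n+2m+2\ell+1}|. \]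
   Context: $\mathbb{F}_q((T^{-1}))$ carries the absolute value $|\xi|=q^{-N}$ for $\xi=\sum_{j\ge N}a_jT^{-j}$ with $a_N\ne0$, $|0|=0$. For a continued fraction $[a_0,a_1,\dots]$ ($a_i\in\mathbb{F}_q[T]$, $\deg_T a_j\ge1$ for $j\ge1$), the convergents $p_k/q_k$ are defined by $p_{-1}=1,p_0=a_0,p_k=a_kp_{k-1}+p_{k-2}$ and $q_{-1}=0,q_0=1,q_k=a_kq_{k-1}+q_{k-2}$. $W^{[n]}$ is the word $W$ repeated $n$ times, and $\overline{W}$ is the infinite periodic repetition of $W$. The height $H(\alpha)$ of an algebraic $\alpha$ is the maximum absolute value of the coefficients of its minimal polynomial (the unique non-constant irreducible primitive polynomial in $(\mathbb{F}_q[T])[X]$ with leading coefficient monic in $T$ vanishing at $\alpha$). $A\asymp_{x}B$ means $|A|\le C|B|$ and $|B|\le C|A|$ for a constant $C>0$ depending at most on $x$ (in particular independent of $n,m,\ell,a_1,\dots,a_{n-1}$). *)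

theory Defs
  imports "HOL-Computational_Algebra.Computational_Algebra"
begin

text \<open>F_q((T^{-1})) is modelled as the Laurent series field 'a fls in the variable X = T^{-1}.
  A polynomial in T is embedded by sending T to X^{-1}.\<close>

definition poly_to_fls :: "'a::field poly \<Rightarrow> 'a fls" where
  "poly_to_fls p = (\<Sum>i\<le>degree p. fls_const (coeff p i) * fls_X_inv ^ i)"

definition fabs :: "'a::{field,finite} fls \<Rightarrow> real" where
  "fabs x = (if x = 0 then 0 else real (card (UNIV :: 'a set)) powr (- real_of_int (fls_subdegree x)))"

text \<open>Continuant recursion with index shift: cf_P A (k+1) = p_k, cf_P A 0 = p_{-1}.\<close>
fun cf_P :: "(nat \<Rightarrow> 'a::comm_ring_1) \<Rightarrow> nat \<Rightarrow> 'a" where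
  "cf_P A 0 = 1"
| "cf_P A (Suc 0) = A 0"
| "cf_P A (Suc (Suc k)) = A (Suc k) * cf_P A (Suc k) + cf_P A k"

fun cf_Q :: "(nat \<Rightarrow> 'a::comm_ring_1) \<Rightarrow> nat \<Rightarrow> 'a" where
  "cf_Q A 0 = 0"
| "cf_Q A (Suc 0) = 1"
| "cf_Q A (Suc (Suc k)) = A (Suc k) * cf_Q A (Suc k) + cf_Q A k"

definition cf_num :: "(nat \<Rightarrow> 'a::comm_ring_1) \<Rightarrow> nat \<Rightarrow> 'a" where
  "cf_num A k = cf_P A (Suc k)"

definition cf_den :: "(nat \<Rightarrow> 'a::comm_ring_1) \<Rightarrow> nat \<Rightarrow> 'a" where
  "cf_den A k = cf_Q A (Suc k)"

definition cf_value :: "(nat \<Rightarrow> 'a::{field,finite} poly) \<Rightarrow> 'a fls" where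
  "cf_value A = (THE xi. \<forall>e>0. \<exists>K. \<forall>k\<ge>K.
      fabs (xi - poly_to_fls (cf_num A k) / poly_to_fls (cf_den A k)) < e)"

definition cf_word :: "(nat \<Rightarrow> 'a) \<Rightarrow> nat \<Rightarrow> 'a \<Rightarrow> 'a list \<Rightarrow> nat \<Rightarrow> 'a::zero" where
  "cf_word a n c W k = (if k = 0 then 0 else if k < n then a k else if k = n then c
      else W ! ((k - n - 1) mod length W))"

definition is_minpoly :: "'a::{field,finite} fls \<Rightarrow> 'a poly poly \<Rightarrow> bool" where
  "is_minpoly xi P \<longleftrightarrow> degree P \<ge> 1 \<and> irreducible P
     \<and> (\<forall>g. (\<forall>i. g dvd coeff P i) \<longrightarrow> is_unit g)
     \<and> lead_coeff (lead_coeff P) = 1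
     \<and> poly (map_poly poly_to_fls P) xi = 0"

definition height :: "'a::{field,finite} fls \<Rightarrow> real" where
  "height xi = (THE h. \<exists>P. is_minpoly xi P \<and>
      h = Max ((\<lambda>i. fabs (poly_to_fls (coeff P i))) ` {..degree P}))"

end

theory Submission
  imports Defs
begin


lemma poly_to_fls_nth:
  "fls_nth (poly_to_fls p) j = (if j \<le> 0 then coeff p (nat (-j)) else 0)"
proof -
  have "fls_nth (poly_to_fls p) j = (\<Sum>i\<le>degree p. (if j = - int i then coeff p i else 0))"
    unfolding poly_to_fls_def fls_nth_sum by (simp, intro sum.cong, auto)
  also have "\<dots> = (if j \<le> 0 then coeff p (nat (-j)) else 0)"
  proof (cases "j \<le> 0 \<and> nat (-j) \<le> degree p")
    case True
    then have "(\<Sum>i\<le>degree p. (if j = - int i then coeff p i else 0)) = (\<Sum>i\<in>{nat (-j)}. coeff p i)"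
      by (intro sum.mono_neutral_cong_right) auto
    then show ?thesis using True by auto
  next
    case False
    then have "(\<Sum>i\<le>degree p. (if j = - int i then coeff p i else 0)) = 0"
      by (intro sum.neutral) auto
    then show ?thesis using False by (auto simp: coeff_eq_0)
  qed
  finally show ?thesis .
qed

lemma ptf_add: "poly_to_fls (p + q) = poly_to_fls p + poly_to_fls q"
  by (rule fls_eqI) (simp add: poly_to_fls_nth)
lemma ptf_diff: "poly_to_fls (p - q) = poly_to_fls p - poly_to_fls q"
  by (rule fls_eqI) (simp add: poly_to_fls_nth)
lemma ptf_uminus: "poly_to_fls (- p) = - poly_to_fls p"
  by (rule fls_eqI) (simp add: poly_to_fls_nth)
lemma ptf_0[simp]: "poly_to_fls 0 = 0"
  by (rule fls_eqI) (simp add: poly_to_fls_nth)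
lemma ptf_const: "poly_to_fls [:c:] = fls_const c"
  by (rule fls_eqI) (auto simp add: poly_to_fls_nth coeff_pCons split: nat.split)
lemma ptf_1[simp]: "poly_to_fls 1 = 1"
  using ptf_const[of 1] by (simp add: one_pCons fls_const_1)
lemma ptf_smult: "poly_to_fls (smult c p) = fls_const c * poly_to_fls p"
  by (rule fls_eqI) (simp add: poly_to_fls_nth)
lemma ptf_pCons0: "poly_to_fls (pCons 0 p) = fls_X_inv * poly_to_fls p"
proof (rule fls_eqI)
  fix n
  have "fls_nth (fls_X_inv * poly_to_fls p) n = fls_nth (poly_to_fls p) (n+1)"
    by (simp add: fls_X_inv_times_conv_shift)
  then show "fls_nth (poly_to_fls (pCons 0 p)) n = fls_nth (fls_X_inv * poly_to_fls p) n"
    by (auto simp add: poly_to_fls_nth coeff_pCons split: nat.split)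
       (auto simp: nat_diff_distrib' Suc_nat_eq_nat_zadd1 )
qed
lemma ptf_mult: "poly_to_fls (p * q) = poly_to_fls p * poly_to_fls q"
proof (induction p)
  case 0 then show ?case by simp
next
  case (pCons a p)
  have "pCons a p * q = smult a q + pCons 0 (p * q)" by simp
  then have "poly_to_fls (pCons a p * q) = fls_const a * poly_to_fls q + fls_X_inv * (poly_to_fls p * poly_to_fls q)"
    using pCons by (simp add: ptf_add ptf_smult ptf_pCons0)
  moreover have "poly_to_fls (pCons a p) = fls_const a + fls_X_inv * poly_to_fls p"
  proof -
    have "pCons a p = [:a:] + pCons 0 p" by simp
    then show ?thesis by (metis ptf_add ptf_const ptf_pCons0)
  qed
  ultimately show ?case by (simp add: algebra_simps)
qed
lemma ptf_power: "poly_to_fls (p ^ k) = poly_to_fls p ^ k"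
  by (induction k) (simp_all add: ptf_mult)

lemma ptf_eq0_iff[simp]: "poly_to_fls p = 0 \<longleftrightarrow> p = 0"
proof
  assume "poly_to_fls p = 0"
  then have "\<forall>j. fls_nth (poly_to_fls p) j = 0" by simp
  then have "\<forall>i. coeff p i = 0" by (metis poly_to_fls_nth nat_int neg_0_le_iff_le of_nat_0_le_iff verit_minus_simplify(4))
  then show "p = 0" by (simp add: poly_eq_iff)
qed simp

lemma ptf_inj: "poly_to_fls p = poly_to_fls q \<longleftrightarrow> p = q"
  using ptf_eq0_iff[of "p - q"] by (simp add: ptf_diff)

lemma ptf_subdegree: "p \<noteq> 0 \<Longrightarrow> fls_subdegree (poly_to_fls p) = - int (degree p)"
  apply (rule fls_subdegree_eqI)
   apply (simp add: poly_to_fls_nth)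
  apply (auto simp add: poly_to_fls_nth)
  by (auto intro!: coeff_eq_0 simp: zless_nat_eq_int_zless)



definition lo :: "int \<Rightarrow> 'a::zero fls \<Rightarrow> bool" where
  "lo N x \<longleftrightarrow> (\<forall>j<N. fls_nth x j = 0)"

lemma lo_0[simp]: "lo N 0" by (simp add: lo_def)
lemma lo_add: "lo N x \<Longrightarrow> lo N y \<Longrightarrow> lo N ((x::'a::comm_monoid_add fls) + y)" by (simp add: lo_def)
lemma lo_uminus: "lo N x \<Longrightarrow> lo N (-(x::'a::ab_group_add fls))" by (simp add: lo_def)
lemma lo_diff: "lo N x \<Longrightarrow> lo N y \<Longrightarrow> lo N ((x::'a::ab_group_add fls) - y)" by (simp add: lo_def)
lemma lo_mono: "lo N x \<Longrightarrow> M \<le> N \<Longrightarrow> lo M x" by (simp add: lo_def)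
lemma lo_subdeg: "lo (fls_subdegree x) x" by (simp add: lo_def)
lemma lo_subdegree_ge: "lo N x \<Longrightarrow> x \<noteq> 0 \<Longrightarrow> N \<le> fls_subdegree x"
  by (rule fls_subdegree_geI) (auto simp: lo_def)
lemma lo_mult:
  fixes x y :: "'a::idom fls"
  assumes "lo N x" "lo M y" shows "lo (N+M) (x*y)"
proof (cases "x = 0 \<or> y = 0")
  case False
  then have "N \<le> fls_subdegree x" "M \<le> fls_subdegree y" using assms lo_subdegree_ge by auto
  then show ?thesis unfolding lo_def by (auto intro!: fls_times_nth_eq0)
qed auto
lemma lo_all: "(\<And>N. lo N x) \<Longrightarrow> x = 0"
proof -
  assume "\<And>N. lo N x"
  then have "lo (fls_subdegree x + 1) x" .
  then have "fls_nth x (fls_subdegree x) = 0" by (simp add: lo_def)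
  then show "x = 0" by (simp add: nth_fls_subdegree_zero_iff)
qed
lemma lo_inverse: "lo (- fls_subdegree x) (inverse (x::'a::field fls))"
  using lo_subdeg[of "inverse x"] by simp
lemma lo_poly: "lo 1 (poly_to_fls p) \<Longrightarrow> p = 0"
proof -
  assume a: "lo 1 (poly_to_fls p)"
  have "coeff p i = 0" for i
    using a[unfolded lo_def, rule_format, of "- int i"] by (simp add: poly_to_fls_nth)
  then show "p = 0" by (simp add: poly_eq_iff)
qed
lemma lo_ptf: "lo (- int (degree p)) (poly_to_fls p)"
  by (cases "p = 0") (use lo_subdeg[of "poly_to_fls p"] in \<open>auto simp: ptf_subdegree\<close>)

definition tends :: "'a::ab_group_add fls \<Rightarrow> (nat \<Rightarrow> 'a fls) \<Rightarrow> bool" where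
  "tends x s \<longleftrightarrow> (\<forall>N. \<exists>K. \<forall>k\<ge>K. lo N (x - s k))"

lemma tends_unique: assumes "tends x s" "tends y s" shows "x = y"
proof -
  have "lo N (x - y)" for N
  proof -
    obtain K1 where "\<forall>k\<ge>K1. lo N (x - s k)" using assms(1) tends_def by blast
    moreover obtain K2 where "\<forall>k\<ge>K2. lo N (y - s k)" using assms(2) tends_def by blast
    ultimately have "lo N ((x - s (max K1 K2)) - (y - s (max K1 K2)))" by (intro lo_diff[of N "x - s (max K1 K2)"]) auto
    then show ?thesis by simp
  qed
  then show ?thesis using lo_all[of "x - y"] by simp
qed

lemma tends_const: "tends x (\<lambda>k. x)" by (simp add: tends_def)
lemma tends_add: "tends x s \<Longrightarrow> tends y t \<Longrightarrow> tends (x + y) (\<lambda>k. s k + t k)"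
  unfolding tends_def
proof (intro allI)
  fix N assume a: "\<forall>N. \<exists>K. \<forall>k\<ge>K. lo N (x - s k)" "\<forall>N. \<exists>K. \<forall>k\<ge>K. lo N (y - t k)"
  obtain K1 where "\<forall>k\<ge>K1. lo N (x - s k)" using a by blast
  moreover obtain K2 where "\<forall>k\<ge>K2. lo N (y - t k)" using a by blast
  ultimately have "\<forall>k\<ge>max K1 K2. lo N ((x - s k) + (y - t k))" by (simp add: lo_add)
  then show "\<exists>K. \<forall>k\<ge>K. lo N (x + y - (s k + t k))" by (metis (no_types, lifting) add_diff_add)
qed
lemma tends_uminus: "tends x s \<Longrightarrow> tends (- x) (\<lambda>k. - s k)"
  unfolding tends_def by (metis lo_uminus minus_diff_minus)
lemma tends_diff: "tends x s \<Longrightarrow> tends y t \<Longrightarrow> tends (x - y) (\<lambda>k. s k - t k)"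
  using tends_add[of x s "-y" "\<lambda>k. - t k"] tends_uminus[of y t] by simp
lemma tends_mult:
  fixes x y :: "'a::idom fls"
  assumes "tends x s" "tends y t" shows "tends (x * y) (\<lambda>k. s k * t k)"
  unfolding tends_def
proof
  fix N
  define M where "M = min (min (fls_subdegree x) (fls_subdegree y)) 0"
  define N1 where "N1 = max N 0 - M"
  obtain K1 where K1: "\<forall>k\<ge>K1. lo N1 (x - s k)" using assms(1) tends_def by blast
  obtain K2 where K2: "\<forall>k\<ge>K2. lo N1 (y - t k)" using assms(2) tends_def by blast
  have "lo N (x * y - s k * t k)" if "k \<ge> max K1 K2" for k
  proof -
    have e: "x * y - s k * t k = x * (y - t k) + (x - s k) * y - (x - s k) * (y - t k)"
      by (simp add: algebra_simps)
    have 1: "lo (fls_subdegree x + N1) (x * (y - t k))" using lo_mult[OF lo_subdeg[of x] K2[rule_format, of k]] that by simp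
    have 2: "lo (N1 + fls_subdegree y) ((x - s k) * y)" using lo_mult[OF K1[rule_format, of k] lo_subdeg[of y]] that by simp
    have 3: "lo (N1 + N1) ((x - s k) * (y - t k))" using lo_mult[OF K1[rule_format, of k] K2[rule_format, of k]] that by simp
    have "lo N (x * (y - t k))" by (rule lo_mono[OF 1]) (simp add: N1_def M_def)
    moreover have "lo N ((x - s k) * y)" by (rule lo_mono[OF 2]) (simp add: N1_def M_def)
    moreover have "lo N ((x - s k) * (y - t k))" by (rule lo_mono[OF 3]) (simp add: N1_def M_def)
    ultimately show ?thesis unfolding e by (intro lo_diff lo_add)
  qed
  then show "\<exists>K. \<forall>k\<ge>K. lo N (x * y - s k * t k)" by blast
qed
lemma tends_offset: "tends x s \<Longrightarrow> tends x (\<lambda>k. s (k + c))"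
  unfolding tends_def by (meson le_add1 order_trans)
lemma tends_cong: "tends x s \<Longrightarrow> (\<And>k. s k = t k) \<Longrightarrow> tends x t"
  unfolding tends_def by simp

definition qq :: "'a::{field,finite} itself \<Rightarrow> real" where
  "qq _ = real (card (UNIV :: 'a set))"

lemma card_ge2: "card (UNIV :: 'a::{field,finite} set) \<ge> 2"
proof -
  have "{0::'a, 1} \<subseteq> UNIV" by simp
  then have "card {0::'a, 1} \<le> card (UNIV :: 'a set)" by (intro card_mono) auto
  then show ?thesis by simp
qed

lemma fabs_nonzero: "x \<noteq> 0 \<Longrightarrow> fabs (x :: 'a::{field,finite} fls) = real (card (UNIV::'a set)) powr (- real_of_int (fls_subdegree x))"
  by (simp add: fabs_def)

lemma fabs_ptf: "fabs (poly_to_fls (p :: 'a::{field,finite} poly)) = (if p = 0 then 0 else real (card (UNIV::'a set)) ^ degree p)"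
  using card_ge2[where 'a='a] by (auto simp: fabs_def ptf_subdegree powr_realpow)

lemma fabs_lo: "lo N x \<Longrightarrow> fabs (x :: 'a::{field,finite} fls) \<le> real (card (UNIV::'a set)) powr (- real_of_int N)"
proof (cases "x = 0")
  case False
  assume "lo N x"
  then have "N \<le> fls_subdegree x" using False lo_subdegree_ge by auto
  then show ?thesis using False card_ge2[where 'a='a] by (simp add: fabs_def)
qed (simp add: fabs_def)

lemma lo_fabs: assumes "fabs x < real (card (UNIV::'a set)) powr (- real_of_int N)"
  shows "lo N (x :: 'a::{field,finite} fls)"
proof (cases "x = 0")
  case False
  then have "real (card (UNIV::'a set)) powr (- real_of_int (fls_subdegree x)) < real (card (UNIV::'a set)) powr (- real_of_int N)"
    using assms by (simp add: fabs_def)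
  then have "N < fls_subdegree x" using card_ge2[where 'a='a] by simp
  then show ?thesis by (simp add: lo_def)
qed simp

lemma small_powr: assumes "e > 0" shows "\<exists>N::int. real (card (UNIV::'a::{field,finite} set)) powr (- real_of_int N) < e"
proof -
  define Q where "Q = real (card (UNIV::'a set))"
  have Q: "Q \<ge> 2" using card_ge2[where 'a='a] by (simp add: Q_def)
  obtain n :: nat where n: "1 / e < Q ^ n" using real_arch_pow[of Q "1/e"] Q by auto
  have "Q powr (- real_of_int (int n)) = 1 / Q ^ n" using Q by (simp add: powr_minus powr_realpow divide_inverse)
  also have "\<dots> < e" using n assms Q by (simp add: field_simps)
  finally show ?thesis unfolding Q_def by blast
qed

lemma tends_fabs: assumes "tends x s"
  shows "\<forall>e>0. \<exists>K. \<forall>k\<ge>K. fabs ((x::'a::{field,finite} fls) - s k) < e"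
proof (intro allI impI)
  fix e :: real assume "e > 0"
  then obtain N where N: "real (card (UNIV::'a set)) powr (- real_of_int N) < e" using small_powr by blast
  obtain K where "\<forall>k\<ge>K. lo N (x - s k)" using assms tends_def by blast
  then show "\<exists>K. \<forall>k\<ge>K. fabs (x - s k) < e" using fabs_lo N by (meson order_le_less_trans)
qed

lemma fabs_tends: assumes "\<forall>e>0. \<exists>K. \<forall>k\<ge>K. fabs ((x::'a::{field,finite} fls) - s k) < e"
  shows "tends x s"
  unfolding tends_def
proof
  fix N
  have "real (card (UNIV::'a set)) powr (- real_of_int N) > 0" using card_ge2[where 'a='a] by simp
  then obtain K where "\<forall>k\<ge>K. fabs (x - s k) < real (card (UNIV::'a set)) powr (- real_of_int N)" using assms by blast
  then show "\<exists>K. \<forall>k\<ge>K. lo N (x - s k)" using lo_fabs by blast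
qed



lemma cf_det: "cf_P A (Suc k) * cf_Q A k - cf_P A k * cf_Q A (Suc k) = (-1) ^ Suc k"
proof (induction k)
  case 0 then show ?case by simp
next
  case (Suc k)
  have "cf_P A (Suc (Suc k)) * cf_Q A (Suc k) - cf_P A (Suc k) * cf_Q A (Suc (Suc k))
        = - (cf_P A (Suc k) * cf_Q A k - cf_P A k * cf_Q A (Suc k))"
    by (simp add: algebra_simps)
  then show ?case using Suc by simp
qed

definition valid :: "(nat \<Rightarrow> 'a::field poly) \<Rightarrow> bool" where
  "valid A \<longleftrightarrow> (\<forall>i\<ge>1. 1 \<le> degree (A i))"

lemma cf_Q_deg_aux:
  assumes "valid A"
  shows "cf_Q A (Suc k) \<noteq> 0 \<and> degree (cf_Q A (Suc k)) = (\<Sum>i\<in>{1..<Suc k}. degree (A i))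
         \<and> (cf_Q A k = 0 \<or> degree (cf_Q A k) < degree (cf_Q A (Suc k)))"
proof (induction k)
  case 0 then show ?case by simp
next
  case (Suc k)
  have dA: "1 \<le> degree (A (Suc k))" using assms by (simp add: valid_def)
  have nz: "A (Suc k) \<noteq> 0" using dA by auto
  have dm: "degree (A (Suc k) * cf_Q A (Suc k)) = degree (A (Suc k)) + degree (cf_Q A (Suc k))"
    using Suc nz by (simp add: degree_mult_eq)
  have lt: "cf_Q A k = 0 \<or> degree (cf_Q A k) < degree (A (Suc k) * cf_Q A (Suc k))"
    using Suc dm dA by auto
  have eq: "degree (cf_Q A (Suc (Suc k))) = degree (A (Suc k) * cf_Q A (Suc k))"
    using lt by (auto simp: degree_add_eq_left)
  have nz2: "cf_Q A (Suc (Suc k)) \<noteq> 0"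
  proof
    assume "cf_Q A (Suc (Suc k)) = 0"
    then have "degree (A (Suc k) * cf_Q A (Suc k)) = 0" using eq by simp
    then show False using dm dA by simp
  qed
  show ?case using nz2 eq dm Suc dA by simp
qed

lemma cf_Q_nz: "valid A \<Longrightarrow> 1 \<le> j \<Longrightarrow> cf_Q A j \<noteq> 0"
  using cf_Q_deg_aux[of A "j - 1"] by simp

lemma cf_Q_deg: "valid A \<Longrightarrow> degree (cf_Q A j) = (\<Sum>i\<in>{1..<j}. degree (A i))"
  using cf_Q_deg_aux[of A "j - 1"] by (cases j) auto

lemma cf_Q_deg_lt: "valid A \<Longrightarrow> cf_Q A j = 0 \<or> degree (cf_Q A j) < degree (cf_Q A (Suc j))"
  using cf_Q_deg_aux[of A j] by blast

definition pre :: "(nat \<Rightarrow> 'a) \<Rightarrow> nat \<Rightarrow> 'a::zero" where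
  "pre A i = (if i = 0 then 0 else A (i - 1))"

lemma cf_P_pre: "cf_P A k = cf_Q (pre A) (Suc k) \<and> cf_P A (Suc k) = cf_Q (pre A) (Suc (Suc k))"
  by (induction k) (auto simp: pre_def)

lemma valid_pre: "(\<forall>i. 1 \<le> degree ((A::nat \<Rightarrow> 'a::field poly) i)) \<Longrightarrow> valid (pre A)"
  by (simp add: valid_def pre_def)

lemma cf_P_nz: "(\<forall>i. 1 \<le> degree ((A::nat \<Rightarrow> 'a::field poly) i)) \<Longrightarrow> cf_P A j \<noteq> 0"
  using cf_Q_nz[OF valid_pre, of A "Suc j"] cf_P_pre[of A j] by simp

lemma cf_P_deg: assumes "\<forall>i. 1 \<le> degree ((A::nat \<Rightarrow> 'a::field poly) i)"
  shows "degree (cf_P A j) = (\<Sum>i<j. degree (A i))"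
proof -
  have "degree (cf_P A j) = (\<Sum>i\<in>{Suc 0..<Suc j}. degree (pre A i))"
    using cf_Q_deg[OF valid_pre[OF assms], of "Suc j"] cf_P_pre[of A j] by simp
  also have "\<dots> = (\<Sum>i\<in>{0..<j}. degree (pre A (Suc i)))"
    by (rule sum.shift_bounds_Suc_ivl)
  also have "\<dots> = (\<Sum>i<j. degree (A i))"
    by (simp add: pre_def atLeast0LessThan)
  finally show ?thesis .
qed

lemma cf_P_le_Q:
  assumes "valid A" "A 0 = 0"
  shows "degree (cf_P A (Suc j)) \<le> degree (cf_Q A (Suc j)) \<and> degree (cf_P A (Suc (Suc j))) \<le> degree (cf_Q A (Suc (Suc j)))"
proof (induction j)
  case 0
  then show ?case using assms by simp
next
  case (Suc j)
  let ?a = "A (Suc (Suc j))"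
  have dA: "1 \<le> degree ?a" using assms by (simp add: valid_def)
  have nz: "cf_Q A (Suc (Suc j)) \<noteq> 0" by (rule cf_Q_nz[OF assms(1)]) simp
  have "degree (cf_P A (Suc (Suc (Suc j)))) \<le> max (degree (?a * cf_P A (Suc (Suc j)))) (degree (cf_P A (Suc j)))"
    by (simp add: degree_add_le_max)
  also have "\<dots> \<le> max (degree ?a + degree (cf_Q A (Suc (Suc j)))) (degree (cf_Q A (Suc j)))"
    using Suc by (intro max.mono) (auto intro: order.trans[OF degree_mult_le])
  also have "\<dots> = degree ?a + degree (cf_Q A (Suc (Suc j)))"
    using cf_Q_deg_lt[OF assms(1), of "Suc j"] by auto
  also have "\<dots> = degree (cf_Q A (Suc (Suc (Suc j))))"
  proof -
    have d: "degree (?a * cf_Q A (Suc (Suc j))) = degree ?a + degree (cf_Q A (Suc (Suc j)))"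
      using nz dA by (subst degree_mult_eq) auto
    have "cf_Q A (Suc j) = 0 \<or> degree (cf_Q A (Suc j)) < degree (?a * cf_Q A (Suc (Suc j)))"
      using cf_Q_deg_lt[OF assms(1), of "Suc j"] d dA by auto
    then show ?thesis using d by (auto simp: degree_add_eq_left)
  qed
  finally show ?case using Suc by simp
qed

subsection \<open>Convergents and the limit\<close>

definition conv :: "(nat \<Rightarrow> 'a::field poly) \<Rightarrow> nat \<Rightarrow> 'a fls" where
  "conv A k = poly_to_fls (cf_num A k) / poly_to_fls (cf_den A k)"

definition dq :: "(nat \<Rightarrow> 'a::field poly) \<Rightarrow> nat \<Rightarrow> nat" where
  "dq A k = degree (cf_Q A (Suc k))"

lemma dq_mono: "valid A \<Longrightarrow> dq A k < dq A (Suc k)"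
  using cf_Q_deg_lt[of A "Suc k"] cf_Q_nz[of A "Suc k"] by (auto simp: dq_def)

lemma dq_ge: "valid A \<Longrightarrow> k \<le> dq A k"
  by (induction k) (simp, metis Suc_le_eq dq_mono le_less_trans)

lemma dq_mono': "valid A \<Longrightarrow> k \<le> j \<Longrightarrow> dq A k \<le> dq A j"
  by (induction j) (auto dest: dq_mono[of A] simp: le_Suc_eq intro: less_imp_le order.trans)

lemma frac_diff: "(b::'a::field) \<noteq> 0 \<Longrightarrow> d \<noteq> 0 \<Longrightarrow> a / b - c / d = (a * d - c * b) * inverse (d * b)"
  by (simp add: field_simps)
lemma frac_aux: "(Q::'a::field) \<noteq> 0 \<Longrightarrow> v * P - v * a * Q = - (v * Q * (a - P / Q))"
  by (simp add: field_simps)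

lemma conv_step: assumes "valid A"
  shows "lo (int (dq A k + dq A (Suc k))) (conv A (Suc k) - conv A k)"
proof -
  let ?P = "\<lambda>j. poly_to_fls (cf_P A j)" and ?Q = "\<lambda>j. poly_to_fls (cf_Q A j)"
  have nz1: "?Q (Suc k) \<noteq> 0" and nz2: "?Q (Suc (Suc k)) \<noteq> 0"
    using cf_Q_nz[OF assms, of "Suc k"] cf_Q_nz[OF assms, of "Suc (Suc k)"] by (simp_all del: cf_Q.simps)
  have "conv A (Suc k) - conv A k = (?P (Suc (Suc k)) * ?Q (Suc k) - ?P (Suc k) * ?Q (Suc (Suc k))) * inverse (?Q (Suc k) * ?Q (Suc (Suc k)))"
    using nz2 nz1 unfolding conv_def cf_num_def cf_den_def by (rule frac_diff)
  also have "?P (Suc (Suc k)) * ?Q (Suc k) - ?P (Suc k) * ?Q (Suc (Suc k)) = poly_to_fls ((-1) ^ Suc (Suc k))"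
    using cf_det[of A "Suc k"] by (metis ptf_diff ptf_mult)
  finally have e: "conv A (Suc k) - conv A k = poly_to_fls ((-1) ^ Suc (Suc k)) * inverse (?Q (Suc k) * ?Q (Suc (Suc k)))" .
  have "lo 0 (poly_to_fls ((-1::'a poly) ^ Suc (Suc k)))" using lo_ptf[of "(-1::'a poly) ^ Suc (Suc k)"] by (simp add: degree_power_eq)
  moreover have "lo (int (dq A k + dq A (Suc k))) (inverse (?Q (Suc k) * ?Q (Suc (Suc k))))"
    using lo_inverse[of "?Q (Suc k) * ?Q (Suc (Suc k))"] nz1 nz2 cf_Q_nz[OF assms, of "Suc k"] cf_Q_nz[OF assms, of "Suc (Suc k)"]
    by (simp add: ptf_subdegree dq_def add.commute del: cf_Q.simps)
  ultimately show ?thesis unfolding e using lo_mult by fastforce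
qed

lemma conv_diff: assumes "valid A" "k \<le> j"
  shows "lo (int (dq A k + dq A (Suc k))) (conv A j - conv A k)"
  using assms(2)
proof (induction j)
  case 0 then show ?case by simp
next
  case (Suc j)
  show ?case
  proof (cases "k = Suc j")
    case False
    then have kj: "k \<le> j" using Suc by simp
    have "lo (int (dq A j + dq A (Suc j))) (conv A (Suc j) - conv A j)" by (rule conv_step[OF assms(1)])
    then have "lo (int (dq A k + dq A (Suc k))) (conv A (Suc j) - conv A j)"
      by (rule lo_mono) (use dq_mono'[OF assms(1) kj] dq_mono'[OF assms(1), of "Suc k" "Suc j"] kj in simp)
    then have "lo (int (dq A k + dq A (Suc k))) ((conv A (Suc j) - conv A j) + (conv A j - conv A k))"
      using Suc kj by (intro lo_add) auto
    then show ?thesis by simp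
  qed simp
qed

lemma conv_diff2: assumes "valid A" "k \<le> j" shows "lo (int (2 * k + 1)) (conv A j - conv A k)"
  by (rule lo_mono[OF conv_diff[OF assms]]) (use dq_ge[OF assms(1), of k] dq_ge[OF assms(1), of "Suc k"] in simp)

definition cflim :: "(nat \<Rightarrow> 'a::field poly) \<Rightarrow> 'a fls" where
  "cflim A = conv A 0 + fps_to_fls (Abs_fps (\<lambda>i. fls_nth (conv A i - conv A 0) (int i)))"

lemma conv0: "conv A 0 = poly_to_fls (A 0)"
  by (simp add: conv_def cf_num_def cf_den_def)

lemma cflim_lo: assumes "valid A" shows "lo (int (2 * k + 1)) (cflim A - conv A k)"
  unfolding lo_def
proof (intro allI impI)
  fix j :: int assume j: "j < int (2 * k + 1)"
  have c0k: "fls_nth (conv A k) j = fls_nth (conv A 0) j" if "j \<le> 0"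
    using conv_diff2[OF assms, of 0 k] that unfolding lo_def by auto
  show "fls_nth (cflim A - conv A k) j = 0"
  proof (cases "j \<le> 0")
    case True
    have "fls_nth (cflim A) j = fls_nth (conv A 0) j"
      using True by (auto simp: cflim_def fps_to_fls_nth)
    then show ?thesis using c0k True by simp
  next
    case False
    have c: "fls_nth (cflim A) j = fls_nth (conv A (nat j)) j"
      using False conv0[of A] by (simp add: cflim_def fps_to_fls_nth poly_to_fls_nth)
    have "fls_nth (conv A (nat j)) j = fls_nth (conv A k) j"
    proof (cases "k \<le> nat j")
      case True
      then show ?thesis using conv_diff2[OF assms True] j unfolding lo_def by auto
    next
      case False
      then have nk: "nat j \<le> k" by simp
      show ?thesis using conv_diff2[OF assms nk] \<open>\<not> j \<le> 0\<close> unfolding lo_def by auto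
    qed
    then show ?thesis using c by simp
  qed
qed

lemma cflim_tends: assumes "valid A" shows "tends (cflim A) (conv A)"
  unfolding tends_def
proof
  fix N
  have "\<forall>k\<ge>nat N. lo N (cflim A - conv A k)"
  proof (intro allI impI)
    fix k assume "nat N \<le> k"
    then have "N \<le> int (2 * k + 1)" by linarith
    then show "lo N (cflim A - conv A k)" using cflim_lo[OF assms, of k] lo_mono by blast
  qed
  then show "\<exists>K. \<forall>k\<ge>K. lo N (cflim A - conv A k)" by blast
qed

lemma cflim_lo2: assumes "valid A"
  shows "lo (int (dq A k + dq A (Suc k))) (cflim A - conv A k)"
proof -
  let ?N = "int (dq A k + dq A (Suc k))"
  obtain K where K: "\<forall>j\<ge>K. lo ?N (cflim A - conv A j)" using cflim_tends[OF assms] tends_def by blast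
  have "lo ?N ((cflim A - conv A (max K k)) + (conv A (max K k) - conv A k))"
    using K conv_diff[OF assms, of k "max K k"] by (intro lo_add) auto
  then show ?thesis by simp
qed

lemma cf_value_eq: assumes "valid (A :: nat \<Rightarrow> 'a::{field,finite} poly)" shows "cf_value A = cflim A"
  unfolding cf_value_def
proof (rule the_equality)
  show "\<forall>e>0. \<exists>K. \<forall>k\<ge>K. fabs (cflim A - poly_to_fls (cf_num A k) / poly_to_fls (cf_den A k)) < e"
    using tends_fabs[OF cflim_tends[OF assms]] by (simp add: conv_def)
next
  fix xi assume "\<forall>e>0. \<exists>K. \<forall>k\<ge>K. fabs (xi - poly_to_fls (cf_num A k) / poly_to_fls (cf_den A k)) < e"
  then have "tends xi (conv A)" using fabs_tends[of xi "conv A"] by (simp add: conv_def)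
  then show "xi = cflim A" using tends_unique cflim_tends[OF assms] by blast
qed

lemma cflim_irrational: assumes "valid A" "v \<noteq> 0"
  shows "poly_to_fls v * cflim A \<noteq> poly_to_fls u"
proof
  assume eq: "poly_to_fls v * cflim A = poly_to_fls u"
  have zero: "v * cf_P A (Suc k) - u * cf_Q A (Suc k) = 0" if k: "degree v \<le> k" for k
  proof -
    have nz: "poly_to_fls (cf_Q A (Suc k)) \<noteq> 0" using cf_Q_nz[OF assms(1), of "Suc k"] by (simp del: cf_Q.simps)
    have "poly_to_fls (v * cf_P A (Suc k) - u * cf_Q A (Suc k))
          = poly_to_fls v * poly_to_fls (cf_P A (Suc k)) - poly_to_fls u * poly_to_fls (cf_Q A (Suc k))"
      by (simp add: ptf_diff ptf_mult)
    also have "\<dots> = poly_to_fls v * poly_to_fls (cf_P A (Suc k)) - poly_to_fls v * cflim A * poly_to_fls (cf_Q A (Suc k))"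
      by (simp add: eq)
    also have "\<dots> = - (poly_to_fls v * poly_to_fls (cf_Q A (Suc k)) * (cflim A - conv A k))"
      using nz unfolding conv_def cf_num_def cf_den_def by (rule frac_aux)
    finally have "poly_to_fls (v * cf_P A (Suc k) - u * cf_Q A (Suc k))
          = - (poly_to_fls v * poly_to_fls (cf_Q A (Suc k)) * (cflim A - conv A k))" .
    moreover have "lo (- int (degree v) + - int (dq A k) + int (dq A k + dq A (Suc k)))
       (poly_to_fls v * poly_to_fls (cf_Q A (Suc k)) * (cflim A - conv A k))"
      by (intro lo_mult lo_ptf cflim_lo2[OF assms(1)]) (simp add: dq_def lo_ptf)
    ultimately have "lo 1 (poly_to_fls (v * cf_P A (Suc k) - u * cf_Q A (Suc k)))"
      using dq_ge[OF assms(1), of "Suc k"] k by (auto intro!: lo_uminus elim!: lo_mono)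
    then show ?thesis by (rule lo_poly)
  qed
  have z1: "v * cf_P A (Suc (degree v)) = u * cf_Q A (Suc (degree v))" using zero[of "degree v"] by simp
  have z2: "v * cf_P A (Suc (Suc (degree v))) = u * cf_Q A (Suc (Suc (degree v)))" using zero[of "Suc (degree v)"] by simp
  have "v * (cf_P A (Suc (Suc (degree v))) * cf_Q A (Suc (degree v)) - cf_P A (Suc (degree v)) * cf_Q A (Suc (Suc (degree v)))) = 0"
  proof -
    have "v * (cf_P A (Suc (Suc (degree v))) * cf_Q A (Suc (degree v)) - cf_P A (Suc (degree v)) * cf_Q A (Suc (Suc (degree v))))
      = (v * cf_P A (Suc (Suc (degree v)))) * cf_Q A (Suc (degree v)) - (v * cf_P A (Suc (degree v))) * cf_Q A (Suc (Suc (degree v)))"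
      by (simp only: algebra_simps)
    also have "\<dots> = (u * cf_Q A (Suc (Suc (degree v)))) * cf_Q A (Suc (degree v)) - (u * cf_Q A (Suc (degree v))) * cf_Q A (Suc (Suc (degree v)))"
      by (simp only: z1 z2)
    also have "\<dots> = 0" by (simp only: algebra_simps diff_self)
    finally show ?thesis .
  qed
  then have "v * (-1) ^ Suc (Suc (degree v)) = 0" by (simp only: cf_det)
  then show False using assms(2) by simp
qed



lemma cf_shift:
  "cf_P A (Suc s + k) = cf_P A (Suc s) * cf_P (\<lambda>i. A (Suc s + i)) k + cf_P A s * cf_Q (\<lambda>i. A (Suc s + i)) k
 \<and> cf_Q A (Suc s + k) = cf_Q A (Suc s) * cf_P (\<lambda>i. A (Suc s + i)) k + cf_Q A s * cf_Q (\<lambda>i. A (Suc s + i)) k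
 \<and> cf_P A (Suc s + Suc k) = cf_P A (Suc s) * cf_P (\<lambda>i. A (Suc s + i)) (Suc k) + cf_P A s * cf_Q (\<lambda>i. A (Suc s + i)) (Suc k)
 \<and> cf_Q A (Suc s + Suc k) = cf_Q A (Suc s) * cf_P (\<lambda>i. A (Suc s + i)) (Suc k) + cf_Q A s * cf_Q (\<lambda>i. A (Suc s + i)) (Suc k)"
proof (induction k)
  case 0 then show ?case by (simp add: algebra_simps)
next
  case (Suc k)
  let ?B = "\<lambda>i. A (Suc s + i)"
  have e1: "Suc s + Suc (Suc k) = Suc (Suc (Suc s + k))" by simp
  have pA: "cf_P A (Suc s + Suc (Suc k)) = A (Suc s + Suc k) * cf_P A (Suc s + Suc k) + cf_P A (Suc s + k)"
    by (simp only: e1 cf_P.simps) simp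
  have qA: "cf_Q A (Suc s + Suc (Suc k)) = A (Suc s + Suc k) * cf_Q A (Suc s + Suc k) + cf_Q A (Suc s + k)"
    by (simp only: e1 cf_Q.simps) simp
  have pB: "cf_P ?B (Suc (Suc k)) = A (Suc s + Suc k) * cf_P ?B (Suc k) + cf_P ?B k" by simp
  have qB: "cf_Q ?B (Suc (Suc k)) = A (Suc s + Suc k) * cf_Q ?B (Suc k) + cf_Q ?B k" by simp
  obtain i1 i2 i3 i4 where IH: "cf_P A (Suc s + k) = i1" "cf_Q A (Suc s + k) = i2"
     "cf_P A (Suc s + Suc k) = i3" "cf_Q A (Suc s + Suc k) = i4" by blast
  have h: "i1 = cf_P A (Suc s) * cf_P ?B k + cf_P A s * cf_Q ?B k"
     "i2 = cf_Q A (Suc s) * cf_P ?B k + cf_Q A s * cf_Q ?B k"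
     "i3 = cf_P A (Suc s) * cf_P ?B (Suc k) + cf_P A s * cf_Q ?B (Suc k)"
     "i4 = cf_Q A (Suc s) * cf_P ?B (Suc k) + cf_Q A s * cf_Q ?B (Suc k)"
    using Suc.IH IH by auto
  have g1: "cf_P A (Suc s + Suc (Suc k)) = cf_P A (Suc s) * cf_P ?B (Suc (Suc k)) + cf_P A s * cf_Q ?B (Suc (Suc k))"
    unfolding pA pB qB IH h by (simp only: algebra_simps)
  have g2: "cf_Q A (Suc s + Suc (Suc k)) = cf_Q A (Suc s) * cf_P ?B (Suc (Suc k)) + cf_Q A s * cf_Q ?B (Suc (Suc k))"
    unfolding qA pB qB IH h by (simp only: algebra_simps)
  show ?case using g1 g2 Suc.IH by blast
qed

lemma valid_shift: "valid A \<Longrightarrow> valid (\<lambda>i. A (Suc s + i))"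
  by (simp add: valid_def)

lemma frac_rel: "(Y::'a::field) \<noteq> 0 \<Longrightarrow> D \<noteq> 0 \<Longrightarrow> D = q1 * X + q0 * Y \<Longrightarrow>
   ((p1 * X + p0 * Y) / D) * (q1 * (X / Y) + q0) = p1 * (X / Y) + p0"
proof -
  assume a: "Y \<noteq> 0" "D \<noteq> 0" "D = q1 * X + q0 * Y"
  have "q1 * (X / Y) + q0 = D / Y" using a by (simp add: field_simps)
  then have "((p1 * X + p0 * Y) / D) * (q1 * (X / Y) + q0) = (p1 * X + p0 * Y) / Y" using a by simp
  also have "\<dots> = p1 * (X / Y) + p0" using a by (simp add: add_divide_distrib)
  finally show ?thesis .
qed

lemma cf_rel:
  assumes "valid A"
  shows "cflim A * (poly_to_fls (cf_Q A (Suc s)) * cflim (\<lambda>i. A (Suc s + i)) + poly_to_fls (cf_Q A s))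
       = poly_to_fls (cf_P A (Suc s)) * cflim (\<lambda>i. A (Suc s + i)) + poly_to_fls (cf_P A s)"
proof -
  let ?B = "\<lambda>i. A (Suc s + i)"
  have vB: "valid ?B" using valid_shift[OF assms] .
  let ?q1 = "poly_to_fls (cf_Q A (Suc s))" and ?q0 = "poly_to_fls (cf_Q A s)"
  let ?p1 = "poly_to_fls (cf_P A (Suc s))" and ?p0 = "poly_to_fls (cf_P A s)"
  have eq: "conv A (k + Suc s) * (?q1 * conv ?B k + ?q0) = ?p1 * conv ?B k + ?p0" for k
  proof -
    let ?X = "poly_to_fls (cf_P ?B (Suc k))" and ?Y = "poly_to_fls (cf_Q ?B (Suc k))"
    have Y: "?Y \<noteq> 0" using cf_Q_nz[OF vB, of "Suc k"] by (simp del: cf_Q.simps)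
    have sh: "Suc (k + Suc s) = Suc s + Suc k" by simp
    have num: "poly_to_fls (cf_num A (k + Suc s)) = ?p1 * ?X + ?p0 * ?Y"
      unfolding cf_num_def sh using cf_shift[of A s k] by (simp add: ptf_add ptf_mult del: cf_P.simps cf_Q.simps)
    have den: "poly_to_fls (cf_den A (k + Suc s)) = ?q1 * ?X + ?q0 * ?Y"
      unfolding cf_den_def sh using cf_shift[of A s k] by (simp add: ptf_add ptf_mult del: cf_P.simps cf_Q.simps)
    have D: "poly_to_fls (cf_den A (k + Suc s)) \<noteq> 0"
      using cf_Q_nz[OF assms, of "Suc (k + Suc s)"] by (simp add: cf_den_def del: cf_Q.simps)
    have cB: "conv ?B k = ?X / ?Y" by (simp add: conv_def cf_num_def cf_den_def)
    have D': "?q1 * ?X + ?q0 * ?Y \<noteq> 0" using D den by auto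
    have cA: "conv A (k + Suc s) = (?p1 * ?X + ?p0 * ?Y) / (?q1 * ?X + ?q0 * ?Y)"
      by (simp only: conv_def num den)
    show ?thesis unfolding cA cB by (rule frac_rel[OF Y D' refl])
  qed
  have tA: "tends (cflim A) (\<lambda>k. conv A (k + Suc s))" by (rule tends_offset[OF cflim_tends[OF assms]])
  have tB: "tends (cflim ?B) (conv ?B)" by (rule cflim_tends[OF vB])
  have t1: "tends (cflim A * (?q1 * cflim ?B + ?q0)) (\<lambda>k. conv A (k + Suc s) * (?q1 * conv ?B k + ?q0))"
    using tends_mult[OF tA tends_add[OF tends_mult[OF tends_const tB] tends_const]] by simp
  have t2: "tends (?p1 * cflim ?B + ?p0) (\<lambda>k. ?p1 * conv ?B k + ?p0)"
    using tends_add[OF tends_mult[OF tends_const tB] tends_const] by simp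
  have t1': "tends (cflim A * (?q1 * cflim ?B + ?q0)) (\<lambda>k. ?p1 * conv ?B k + ?p0)"
    using t1 eq by (simp add: tends_def)
  show ?thesis using tends_unique[OF t1' t2] .
qed

subsection \<open>Evaluation homomorphism\<close>

definition ev :: "'a::field poly poly \<Rightarrow> 'a fls \<Rightarrow> 'a fls" where
  "ev P x = poly (map_poly poly_to_fls P) x"

lemma map_ptf_add: "map_poly poly_to_fls (P + Q) = map_poly poly_to_fls P + map_poly poly_to_fls Q"
  by (rule poly_eqI) (simp add: coeff_map_poly ptf_add)

lemma ev_add: "ev (P + Q) x = ev P x + ev Q x"
  by (simp add: ev_def map_ptf_add)

lemma ev_pCons: "ev (pCons a P) x = poly_to_fls a + x * ev P x"
  by (simp add: ev_def map_poly_pCons)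

lemma ev_smult: "ev (smult c P) x = poly_to_fls c * ev P x"
  by (simp add: ev_def map_poly_smult ptf_mult)

lemma ev_mult: "ev (P * Q) x = ev P x * ev Q x"
proof (induction P)
  case 0 then show ?case by (simp add: ev_def)
next
  case (pCons a P)
  have "pCons a P * Q = smult a Q + pCons 0 (P * Q)" by simp
  then have "ev (pCons a P * Q) x = poly_to_fls a * ev Q x + x * (ev P x * ev Q x)"
    using pCons by (simp add: ev_add ev_smult ev_pCons)
  then show ?case by (simp add: ev_pCons algebra_simps)
qed

lemma ev_0: "ev 0 x = 0" by (simp add: ev_def)

lemma ev_const: "ev [:c:] x = poly_to_fls c"
  using ev_pCons[of c 0 x] by (simp add: ev_0)

lemma ev_3: "ev [:a, b, c:] x = poly_to_fls a + x * poly_to_fls b + x * x * poly_to_fls c"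
  using ev_pCons[of a "[:b, c:]" x] ev_pCons[of b "[:c:]" x] ev_const[of c x] by (simp add: algebra_simps)

lemma poly_le1: "degree (F::'b::zero poly) \<le> 1 \<Longrightarrow> F = [:coeff F 0, coeff F 1:]"
  by (rule poly_eqI) (auto simp: coeff_pCons coeff_eq_0 split: nat.split)

lemma poly_le2: assumes "degree (F::'b::zero poly) \<le> 2" shows "F = [:coeff F 0, coeff F 1, coeff F 2:]"
proof (rule poly_eqI)
  fix n
  show "coeff F n = coeff [:coeff F 0, coeff F 1, coeff F 2:] n"
  proof (cases "n \<le> 2")
    case True
    then have "n = 0 \<or> n = 1 \<or> n = 2" by auto
    then show ?thesis by (auto simp: coeff_pCons numeral_2_eq_2)
  next
    case False
    have k: "n = Suc (Suc (Suc (n - 3)))" using False by simp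
    have "coeff F n = 0" using False assms by (intro coeff_eq_0) simp
    then show ?thesis by (subst k) (simp add: coeff_pCons)
  qed
qed



subsection \<open>Arithmetic in F[T]\<close>

lemma bezout_poly: "\<exists>d s t. d = s * x + t * y \<and> d dvd x \<and> d dvd (y :: 'a::field poly)"
proof (induction "euclidean_size y" arbitrary: x y rule: less_induct)
  case less
  show ?case
  proof (cases "y = 0")
    case True
    then show ?thesis by (intro exI[of _ x] exI[of _ 1] exI[of _ 0]) simp
  next
    case False
    have "euclidean_size (x mod y) < euclidean_size y" using False by (rule mod_size_less)
    then obtain d s t where d: "d = s * y + t * (x mod y)" "d dvd y" "d dvd x mod y"
      using less by blast
    have xe: "x = (x div y) * y + x mod y" by simp
    have "d dvd x" using d(2,3) by (subst xe) (intro dvd_add dvd_mult)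
    moreover have "d = t * x + (s - t * (x div y)) * y"
      using d(1) by (subst (asm) minus_div_mult_eq_mod[symmetric]) (simp add: algebra_simps)
    ultimately show ?thesis using d(2) by blast
  qed
qed

lemma irred_prime:
  fixes p :: "'a::field poly"
  assumes "irreducible p" "p dvd a * b" shows "p dvd a \<or> p dvd b"
proof -
  obtain d s t where d: "d = s * p + t * a" "d dvd p" "d dvd a" using bezout_poly by blast
  obtain k where k: "p = d * k" using d(2) by blast
  then have "d dvd 1 \<or> k dvd 1" using assms(1) irreducibleD by blast
  then show ?thesis
  proof
    assume "k dvd 1"
    then have "p dvd d" using k by (metis dvd_mult_unit_iff dvd_refl)
    then show ?thesis using d(3) by (blast intro: dvd_trans)
  next
    assume "d dvd 1"
    then obtain e where e: "1 = d * e" by blast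
    have h1: "s * p * b + t * (a * b) = d * b" using d(1) by (simp add: algebra_simps)
    have "e * (s * p * b + t * (a * b)) = (d * e) * b" unfolding h1 by (simp add: algebra_simps)
    then have "b = e * (s * p * b + t * (a * b))" using e by simp
    moreover have "p dvd e * (s * p * b + t * (a * b))"
    proof -
      have "p dvd s * p * b" by simp
      moreover have "p dvd t * (a * b)" using assms(2) by simp
      ultimately have "p dvd s * p * b + t * (a * b)" by (rule dvd_add)
      then show ?thesis by (rule dvd_mult)
    qed
    ultimately show ?thesis by simp
  qed
qed

lemma irred_factor:
  fixes l :: "'a::field poly"
  shows "l \<noteq> 0 \<Longrightarrow> \<not> l dvd 1 \<Longrightarrow> \<exists>p. irreducible p \<and> p dvd l"
proof (induction "degree l" arbitrary: l rule: less_induct)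
  case less
  show ?case
  proof (cases "irreducible l")
    case True then show ?thesis by (intro exI[of _ l]) auto
  next
    case False
    then obtain a b where ab: "l = a * b" "\<not> a dvd 1" "\<not> b dvd 1" using less.prems unfolding irreducible_def by blast
    have a0: "a \<noteq> 0" and b0: "b \<noteq> 0" using ab less.prems by auto
    have "degree b \<noteq> 0" using ab(3) b0 is_unit_iff_degree by blast
    then have "degree a < degree l" using ab(1) a0 b0 by (simp add: degree_mult_eq)
    then obtain p where "irreducible p" "p dvd a" using less a0 ab(2) by blast
    then show ?thesis using ab(1) by auto
  qed
qed

definition primitive :: "'a::field poly poly \<Rightarrow> bool" where
  "primitive P \<longleftrightarrow> (\<forall>g. (\<forall>i. g dvd coeff P i) \<longrightarrow> is_unit g)"

lemma coeff_mult3: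
  "coeff ([:a0, a1, a2:] * Q) k = a0 * coeff Q k + (if k \<ge> 1 then a1 * coeff Q (k - 1) else 0)
     + (if k \<ge> 2 then a2 * coeff Q (k - 2) else 0)"
proof -
  have "[:a0, a1, a2:] * Q = smult a0 Q + pCons 0 (smult a1 Q + pCons 0 (smult a2 Q))"
    by (simp add: algebra_simps)
  then show ?thesis by (cases k; cases "k - 1") (auto simp: coeff_pCons add.assoc)
qed

lemma gauss3:
  fixes Pn Qd :: "'a::field poly poly"
  assumes deg: "degree Pn \<le> 2" and prim: "primitive Pn" and p: "irreducible p"
    and dv: "\<forall>k. p dvd coeff (Pn * Qd) k"
  shows "p dvd coeff Qd k"
proof -
  define a0 where "a0 = coeff Pn 0"
  define a1 where "a1 = coeff Pn 1"
  define a2 where "a2 = coeff Pn 2"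
  have Pe: "Pn = [:a0, a1, a2:]" using poly_le2[OF deg] a0_def a1_def a2_def by simp
  have pnu: "\<not> p dvd 1" using p irreducible_not_unit by blast
  have notall: "\<not> (p dvd a0 \<and> p dvd a1 \<and> p dvd a2)"
  proof
    assume "p dvd a0 \<and> p dvd a1 \<and> p dvd a2"
    then have "\<forall>i. p dvd coeff Pn i" using Pe by (auto simp: coeff_pCons split: nat.split)
    then show False using prim pnu unfolding primitive_def by blast
  qed
  have c: "p dvd a0 * coeff Qd k + (if k \<ge> 1 then a1 * coeff Qd (k - 1) else 0)
     + (if k \<ge> 2 then a2 * coeff Qd (k - 2) else 0)" for k
    using dv coeff_mult3[of a0 a1 a2 Qd k] Pe by metis
  show ?thesis
  proof (induction k rule: less_induct)
    case (less k)
    show ?case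
    proof (cases "p dvd a0")
      case False
      have "p dvd a0 * coeff Qd k"
      proof -
        have "p dvd (if k \<ge> 1 then a1 * coeff Qd (k - 1) else 0)" using less by auto
        moreover have "p dvd (if k \<ge> 2 then a2 * coeff Qd (k - 2) else 0)" using less by auto
        ultimately show ?thesis using c[of k] by (metis dvd_add_left_iff dvd_add_right_iff add.assoc)
      qed
      then show ?thesis using irred_prime[OF p] False by blast
    next
      case a0d: True
      show ?thesis
      proof (cases "p dvd a1")
        case False
        have "p dvd a1 * coeff Qd k"
        proof -
          have "p dvd a0 * coeff Qd (k+1)" using a0d by simp
          moreover have "p dvd (if k + 1 \<ge> 2 then a2 * coeff Qd (k + 1 - 2) else 0)" using less by auto
          ultimately show ?thesis using c[of "k+1"] by simp (metis dvd_add_left_iff dvd_add_right_iff add.assoc)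
        qed
        then show ?thesis using irred_prime[OF p] False by blast
      next
        case True
        then have "\<not> p dvd a2" using a0d notall by blast
        have "p dvd a2 * coeff Qd k"
        proof -
          have "p dvd a0 * coeff Qd (k+2)" using a0d by simp
          moreover have "p dvd a1 * coeff Qd (k + 1)" using True by simp
          ultimately show ?thesis using c[of "k+2"] by simp (metis dvd_add_left_iff dvd_add_right_iff add.assoc)
        qed
        then show ?thesis using irred_prime[OF p] \<open>\<not> p dvd a2\<close> by blast
      qed
    qed
  qed
qed

lemma cancel_const:
  fixes Pn P' :: "'a::field poly poly"
  assumes deg: "degree Pn = 2" and prim: "primitive Pn" and irr: "irreducible P'"
  shows "l \<noteq> 0 \<Longrightarrow> smult l P' = Pn * Qd \<Longrightarrow> \<exists>u. u \<noteq> 0 \<and> degree u = 0 \<and> P' = Pn * [:u:]"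
proof (induction "degree l" arbitrary: l Qd rule: less_induct)
  case less
  show ?case
  proof (cases "l dvd 1")
    case True
    then obtain li where li: "1 = l * li" by blast
    have "P' = Pn * smult li Qd" using less.prems(2) li
      by (metis mult.commute mult_smult_right smult_1_left smult_smult)
    then have "Pn dvd 1 \<or> smult li Qd dvd 1" using irr irreducibleD by blast
    moreover have "\<not> Pn dvd 1" using deg by (auto simp: is_unit_poly_iff)
    ultimately obtain u where u: "smult li Qd = [:u:]" "u dvd 1" by (auto simp: is_unit_poly_iff)
    have "u \<noteq> 0" using u(2) by auto
    moreover have "degree u = 0" using u(2) \<open>u \<noteq> 0\<close> is_unit_iff_degree by blast
    ultimately
    show ?thesis using \<open>P' = Pn * smult li Qd\<close> u(1) by auto
  next
    case False
    obtain p where p: "irreducible p" "p dvd l" using irred_factor[OF less.prems(1) False] by blast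
    obtain l' where l': "l = p * l'" using p(2) by blast
    have "\<forall>k. p dvd coeff (Pn * Qd) k" using less.prems(2) l' by (metis coeff_smult dvd_mult2 dvd_triv_left mult.assoc)
    then have "\<forall>k. p dvd coeff Qd k" using gauss3[OF _ prim p(1)] deg by auto
    then obtain Qd' where Qd': "Qd = smult p Qd'"
    proof -
      define Qd' where "Qd' = map_poly (\<lambda>x. x div p) Qd"
      have "Qd = smult p Qd'"
        by (rule poly_eqI) (use \<open>\<forall>k. p dvd coeff Qd k\<close> in \<open>simp add: Qd'_def coeff_map_poly\<close>)
      then show ?thesis using that by blast
    qed
    have p0: "p \<noteq> 0" using p(1) by auto
    have "smult p (smult l' P') = smult p (Pn * Qd')" using less.prems(2) l' Qd' by (simp add: mult_smult_right)
    then have "smult p (smult l' P' - Pn * Qd') = 0" by (simp add: smult_diff_right)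
    then have e: "smult l' P' = Pn * Qd'" using p0 by simp
    have l'0: "l' \<noteq> 0" using less.prems(1) l' by auto
    have "degree p \<noteq> 0" using p(1) p0 is_unit_iff_degree irreducible_not_unit by blast
    then have "degree l' < degree l" using l' l'0 p0 by (simp add: degree_mult_eq)
    then show ?thesis using less(1)[OF _ l'0 e] by blast
  qed
qed

definition irr :: "'a::field fls \<Rightarrow> bool" where
  "irr x \<longleftrightarrow> (\<forall>u v. v \<noteq> 0 \<longrightarrow> poly_to_fls v * x \<noteq> poly_to_fls u)"

lemma ev_deg1_nz:
  assumes "irr x" "degree F = 1" shows "ev F x \<noteq> 0"
proof
  assume "ev F x = 0"
  then have "poly_to_fls (coeff F 0) + x * poly_to_fls (coeff F 1) = 0"
    using poly_le1[of F] assms(2) ev_pCons[of "coeff F 0" "[:coeff F 1:]" x] by (simp add: ev_0 ev_const)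
  then have "poly_to_fls (coeff F 1) * x = poly_to_fls (- coeff F 0)"
    by (simp add: ptf_uminus algebra_simps eq_neg_iff_add_eq_0)
  moreover have "coeff F 1 \<noteq> 0"
  proof -
    have "F \<noteq> 0" using assms(2) by auto
    then have "coeff F (degree F) \<noteq> 0" by simp
    then show ?thesis using assms(2) by simp
  qed
  ultimately show False using assms(1) irr_def by blast
qed

lemma irreducible_Pn:
  fixes Pn :: "'a::field poly poly"
  assumes "irr x" "degree Pn = 2" "primitive Pn" "ev Pn x = 0"
  shows "irreducible Pn"
proof (rule irreducibleI)
  show "Pn \<noteq> 0" using assms(2) by auto
  show "\<not> Pn dvd 1" using assms(2) by (auto simp: is_unit_poly_iff)
  fix F G assume FG: "Pn = F * G"
  have F0: "F \<noteq> 0" and G0: "G \<noteq> 0" using FG \<open>Pn \<noteq> 0\<close> by auto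
  have dsum: "degree F + degree G = 2" using FG F0 G0 assms(2) by (simp add: degree_mult_eq)
  have const_unit: "H dvd 1" if "degree H = 0" "Pn = H * K" for H K
  proof -
    define h where "h = coeff H 0"
    have He: "H = [:h:]" unfolding h_def by (rule sym[OF degree_0_id[OF that(1)]])
    have "Pn = [:h:] * K" using that(2) by (subst (asm) He)
    then have "Pn = smult h K" by simp
    then have "\<forall>i. h dvd coeff Pn i" by simp
    then have "h dvd 1" using assms(3) primitive_def by blast
    then show ?thesis using He by (simp add: is_unit_const_poly_iff)
  qed
  show "F dvd 1 \<or> G dvd 1"
  proof (cases "degree F = 0")
    case True then show ?thesis using const_unit FG by blast
  next
    case False
    show ?thesis
    proof (cases "degree G = 0")
      case True then show ?thesis using const_unit FG by (metis mult.commute)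
    next
      case False
      then have "degree F = 1" "degree G = 1" using dsum \<open>degree F \<noteq> 0\<close> by auto
      then have "ev F x \<noteq> 0" "ev G x \<noteq> 0" using ev_deg1_nz assms(1) by auto
      moreover have "ev F x * ev G x = 0" using assms(4) FG ev_mult by metis
      ultimately show ?thesis by simp
    qed
  qed
qed

lemma assoc_root:
  fixes Pn P' :: "'a::field poly poly"
  assumes x: "irr x" and deg: "degree Pn = 2" and prim: "primitive Pn" and r: "ev Pn x = 0"
    and irrP: "irreducible P'" and r': "ev P' x = 0"
  shows "\<exists>u. u \<noteq> 0 \<and> degree u = 0 \<and> P' = Pn * [:u:]"
proof -
  have Pn0: "Pn \<noteq> 0" using deg by auto
  obtain Qd rr where pd: "pseudo_divmod P' Pn = (Qd, rr)" by (metis surj_pair)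
  let ?l = "coeff Pn (degree Pn) ^ (Suc (degree P') - degree Pn)"
  have e: "smult ?l P' = Pn * Qd + rr" and rd: "rr = 0 \<or> degree rr < degree Pn"
    using pseudo_divmod[OF Pn0 pd] by auto
  have l0: "?l \<noteq> 0" using Pn0 by simp
  have "ev rr x = 0"
  proof -
    have "ev (smult ?l P') x = ev (Pn * Qd) x + ev rr x" using e ev_add by metis
    then show ?thesis using r r' by (simp add: ev_smult ev_mult)
  qed
  have rr0: "rr = 0"
  proof (rule ccontr)
    assume nz: "rr \<noteq> 0"
    then have "degree rr \<le> 1" using rd deg by auto
    show False
    proof (cases "degree rr = 1")
      case True then show False using ev_deg1_nz[OF x True] \<open>ev rr x = 0\<close> by simp
    next
      case False
      then have "degree rr = 0" using \<open>degree rr \<le> 1\<close> by simp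
      then have "rr = [:coeff rr 0:]" by (rule sym[OF degree_0_id])
      then have "poly_to_fls (coeff rr 0) = 0" using \<open>ev rr x = 0\<close> ev_const by metis
      then have "coeff rr 0 = 0" by simp
      then show False using \<open>rr = [:coeff rr 0:]\<close> nz by simp
    qed
  qed
  have "smult ?l P' = Pn * Qd" using e rr0 by simp
  then show ?thesis by (rule cancel_const[OF deg prim irrP l0])
qed



definition mm :: "('a::comm_ring_1 \<times> 'a \<times> 'a \<times> 'a) \<Rightarrow> ('a \<times> 'a \<times> 'a \<times> 'a) \<Rightarrow> ('a \<times> 'a \<times> 'a \<times> 'a)" where
  "mm X Y = (case X of (a, b, c, d) \<Rightarrow> case Y of (e, f, g, h) \<Rightarrow> (a*e+b*g, a*f+b*h, c*e+d*g, c*f+d*h))"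

fun prodM :: "'a::comm_ring_1 list \<Rightarrow> ('a \<times> 'a \<times> 'a \<times> 'a)" where
  "prodM [] = (1, 0, 0, 1)"
| "prodM (x # xs) = mm (x, 1, 1, 0) (prodM xs)"

definition detM :: "('a::comm_ring_1 \<times> 'a \<times> 'a \<times> 'a) \<Rightarrow> 'a" where
  "detM X = (case X of (a, b, c, d) \<Rightarrow> a * d - b * c)"

definition scal :: "'a::comm_ring_1 \<Rightarrow> 'a \<Rightarrow> ('a \<times> 'a \<times> 'a \<times> 'a) \<Rightarrow> bool" where
  "scal g l X = (case X of (a, b, c, d) \<Rightarrow> g dvd a - l \<and> g dvd b \<and> g dvd c \<and> g dvd d - l)"

lemma mm_assoc: "mm (mm X Y) Z = mm X (mm Y Z)"
  by (cases X; cases Y; cases Z) (simp add: mm_def algebra_simps)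

lemma mm_id: "mm (1, 0, 0, 1) Y = Y"
  by (cases Y) (simp add: mm_def)

lemma prodM_append: "prodM (xs @ ys) = mm (prodM xs) (prodM ys)"
  by (induction xs) (simp_all add: mm_id mm_assoc)

lemma detM_mm: "detM (mm X Y) = detM X * detM Y"
  by (cases X; cases Y) (simp add: mm_def detM_def algebra_simps)

lemma detM_M: "detM (x, 1, 1, 0) = -1" by (simp add: detM_def)
lemma detM_I: "detM (1, 0, 0, 1) = 1" by (simp add: detM_def)

lemma detM_prodM: "detM (prodM xs) = (-1) ^ length xs"
  by (induction xs) (auto simp: detM_mm detM_M detM_I)

lemma prodM_single: "prodM [x] = (x, 1, 1, 0)" by (simp add: mm_def)

lemma prodM_cf: "prodM (map B [0..<Suc k]) = (cf_P B (Suc k), cf_P B k, cf_Q B (Suc k), cf_Q B k)"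
proof (induction k)
  case 0 then show ?case by (simp add: mm_def)
next
  case (Suc k)
  have m: "map B [0..<Suc (Suc k)] = map B [0..<Suc k] @ [B (Suc k)]" by simp
  have "prodM (map B [0..<Suc (Suc k)]) = mm (prodM (map B [0..<Suc k])) (prodM [B (Suc k)])"
    unfolding m by (rule prodM_append)
  then show ?case using Suc by (simp add: mm_def algebra_simps prodM_single del: upt_Suc prodM.simps)
qed

lemma scal_dvd_det: assumes "scal g l X" shows "g dvd l * l - detM X"
proof -
  obtain a b c d where X: "X = (a, b, c, d)" by (cases X)
  from assms X obtain t1 t2 t3 t4 where t: "a - l = g * t1" "b = g * t2" "c = g * t3" "d - l = g * t4"
    by (auto simp: scal_def elim!: dvdE)
  have "l * l - detM X = g * (- (l * t4) - t1 * l - g * t1 * t4 + g * t2 * t3)"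
    using t unfolding X detM_def by (simp add: algebra_simps)
  then show ?thesis by simp
qed

lemma rot:
  assumes "detM X * detM X = 1" "scal g l (mm X Y)" shows "scal g l (mm Y X)"
proof -
  obtain x1 x2 x3 x4 where X: "X = (x1, x2, x3, x4)" by (cases X)
  obtain y1 y2 y3 y4 where Y: "Y = (y1, y2, y3, y4)" by (cases Y)
  define e where "e = x1 * x4 - x2 * x3"
  have ee: "e * e = 1" using assms(1) X by (simp add: detM_def e_def)
  from assms(2) obtain t1 t2 t3 t4 where
    t: "x1*y1 + x2*y3 - l = g * t1" "x1*y2 + x2*y4 = g * t2" "x3*y1 + x4*y3 = g * t3" "x3*y2 + x4*y4 - l = g * t4"
    unfolding X Y mm_def scal_def by (auto elim!: dvdE)
  have sw: "z = e * w" if "e * z = w" for z w using that ee by (metis mult.assoc mult_1)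
  have id0: "e * (y1*x1 + y2*x3 - l) = (x4*(g*t1) - x2*(g*t3))*x1 + (x4*(g*t2) - x2*(g*t4))*x3"
    unfolding t[symmetric] e_def by (simp add: algebra_simps)
  have r0: "y1*x1 + y2*x3 - l = g * (e * ((x4*t1 - x2*t3)*x1 + (x4*t2 - x2*t4)*x3))"
    using sw[OF id0] by (simp add: algebra_simps)
  have id1: "e * (y1*x2 + y2*x4) = (x4*(g*t1) - x2*(g*t3))*x2 + (x4*(g*t2) - x2*(g*t4))*x4"
    unfolding t[symmetric] e_def by (simp add: algebra_simps)
  have r1: "y1*x2 + y2*x4 = g * (e * ((x4*t1 - x2*t3)*x2 + (x4*t2 - x2*t4)*x4))"
    using sw[OF id1] by (simp add: algebra_simps)
  have id2: "e * (y3*x1 + y4*x3) = (x1*(g*t3) - x3*(g*t1))*x1 + (x1*(g*t4) - x3*(g*t2))*x3"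
    unfolding t[symmetric] e_def by (simp add: algebra_simps)
  have r2: "y3*x1 + y4*x3 = g * (e * ((x1*t3 - x3*t1)*x1 + (x1*t4 - x3*t2)*x3))"
    using sw[OF id2] by (simp add: algebra_simps)
  have id3: "e * (y3*x2 + y4*x4 - l) = (x1*(g*t3) - x3*(g*t1))*x2 + (x1*(g*t4) - x3*(g*t2))*x4"
    unfolding t[symmetric] e_def by (simp add: algebra_simps)
  have r3: "y3*x2 + y4*x4 - l = g * (e * ((x1*t3 - x3*t1)*x2 + (x1*t4 - x3*t2)*x4))"
    using sw[OF id3] by (simp add: algebra_simps)
  have "scal g l (y1*x1 + y2*x3, y1*x2 + y2*x4, y3*x1 + y4*x3, y3*x2 + y4*x4)"
    unfolding scal_def prod.case r0 r1 r2 r3 by simp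
  then show ?thesis by (simp add: X Y mm_def)
qed

lemma dvd_helper:
  fixes g z l s :: "'a::comm_ring_1"
  assumes "g dvd z * l" "g dvd l * l - s" "s * s = 1" shows "g dvd z"
proof -
  have a1: "g dvd z * l * l" using assms(1) by (rule dvd_mult2)
  have a2: "g dvd z * (l * l - s)" using assms(2) by (rule dvd_mult)
  have "g dvd z * l * l - z * (l * l - s)" using a1 a2 by (rule dvd_diff)
  then have "g dvd z * s" by (simp add: algebra_simps)
  then have "g dvd z * s * s" by (rule dvd_mult2)
  then show ?thesis using assms(3) by (simp add: mult.assoc)
qed

lemma rep_form: "1 \<le> m \<Longrightarrow> \<exists>u v w. prodM (replicate m b) = (u, v, v, w) \<and> u = b * v + w"
proof (induction m)
  case 0 then show ?case by simp
next
  case (Suc m)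
  show ?case
  proof (cases "m = 0")
    case True then show ?thesis by (simp add: mm_def)
  next
    case False
    then obtain u v w where "prodM (replicate m b) = (u, v, v, w)" "u = b * v + w" using Suc by auto
    then show ?thesis by (intro exI[of _ "b * u + v"] exI[of _ u] exI[of _ v]) (simp add: mm_def algebra_simps)
  qed
qed

lemma case_bd:
  assumes "1 \<le> m" "scal g l (prodM (replicate m b @ [d]))"
  shows "g dvd (b - d)"
proof -
  obtain u v w where uvw: "prodM (replicate m b) = (u, v, v, w)" "u = b * v + w" using rep_form[OF assms(1)] by blast
  have pe: "prodM (replicate m b @ [d]) = (u * d + v, u, v * d + w, v)"
    by (simp add: prodM_append uvw mm_def)
  have s: "g dvd u * d + v - l" "g dvd u" "g dvd v * d + w" "g dvd v - l" using assms(2) pe by (auto simp: scal_def)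
  have "(b - d) * l = (b - d) * (l - v) + u - (v * d + w)" using uvw(2) by (simp add: algebra_simps)
  moreover have "g dvd (b - d) * (l - v)" using s(4) by (metis dvd_minus_iff dvd_mult minus_diff_eq)
  ultimately have "g dvd (b - d) * l" using s(2,3) by (metis dvd_add dvd_diff)
  moreover have "g dvd l * l - detM (prodM (replicate m b @ [d]))" using scal_dvd_det[OF assms(2)] .
  moreover have "detM (prodM (replicate m b @ [d])) * detM (prodM (replicate m b @ [d])) = 1"
    by (simp add: detM_prodM power_mult_distrib[symmetric])
  ultimately show ?thesis by (rule dvd_helper)
qed

lemma bd_form: "1 \<le> m \<Longrightarrow> \<exists>s t r. prodM (concat (replicate m [b, d])) = (s, b * t, d * t, r) \<and> s = b * d * t + r"
proof (induction m)
  case 0 then show ?case by simp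
next
  case (Suc m)
  show ?case
  proof (cases "m = 0")
    case True then show ?thesis by (intro exI[of _ "b*d+1"] exI[of _ 1] exI[of _ 1]) (simp add: mm_def)
  next
    case False
    then obtain s t r where str: "prodM (concat (replicate m [b, d])) = (s, b * t, d * t, r)" "s = b * d * t + r" using Suc by auto
    have "prodM (concat (replicate (Suc m) [b, d])) = mm (b, 1, 1, 0) (mm (d, 1, 1, 0) (s, b * t, d * t, r))"
      using str by simp
    also have "\<dots> = ((b*d+1)*s + b*d*t, b * (s + t), d * (s + t), d*b*t + r)"
      using str(2) by (simp add: mm_def algebra_simps)
    finally show ?thesis using str(2)
      by (intro exI[of _ "(b*d+1)*s + b*d*t"] exI[of _ "s + t"] exI[of _ "d*b*t + r"]) (simp add: algebra_simps)
  qed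
qed

lemma case_bdc:
  assumes "1 \<le> m" "scal g l (prodM (concat (replicate m [b, d]) @ [c]))"
  shows "g dvd (b - d)"
proof -
  obtain s t r where str: "prodM (concat (replicate m [b, d])) = (s, b * t, d * t, r)" "s = b * d * t + r"
    using bd_form[OF assms(1)] by blast
  have pe: "prodM (concat (replicate m [b, d]) @ [c]) = (s * c + b * t, s, d * t * c + r, d * t)"
    by (simp add: prodM_append str mm_def)
  have h: "g dvd s * c + b * t - l" "g dvd s" "g dvd d * t - l" using assms(2) pe by (auto simp: scal_def)
  have h2: "g dvd b * t - l"
  proof -
    have "g dvd s * c" using h(2) by (rule dvd_mult2)
    then have "g dvd (s * c + b * t - l) - s * c" using h(1) by (metis dvd_diff)
    then show ?thesis by (simp add: algebra_simps)
  qed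
  have "(b - d) * l = d * (b * t - l) - b * (d * t - l)" by (simp add: algebra_simps)
  then have "g dvd (b - d) * l" using h2 h(3) by (metis dvd_diff dvd_mult)
  moreover have "g dvd l * l - detM (prodM (concat (replicate m [b, d]) @ [c]))" using scal_dvd_det[OF assms(2)] .
  moreover have "detM (prodM (concat (replicate m [b, d]) @ [c])) * detM (prodM (concat (replicate m [b, d]) @ [c])) = 1"
    by (simp add: detM_prodM power_mult_distrib[symmetric])
  ultimately show ?thesis by (rule dvd_helper)
qed

lemma detsq: "detM (prodM xs) * detM (prodM xs) = 1"
  by (simp add: detM_prodM power_mult_distrib[symmetric])

lemma case1: "scal g l (prodM [b]) \<Longrightarrow> g dvd 1"
  by (simp add: scal_def mm_def)

lemma case2: "1 \<le> m \<Longrightarrow> scal g l (prodM (replicate m b @ [d])) \<Longrightarrow> g dvd (b - d)"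
  by (rule case_bd)

lemma case3: assumes "1 \<le> m" "scal g l (prodM (replicate m b @ [c] @ replicate k b))"
  shows "g dvd (b - c)"
proof -
  have "scal g l (mm (prodM (replicate m b @ [c])) (prodM (replicate k b)))"
    using assms(2) by (simp add: prodM_append[symmetric])
  then have "scal g l (mm (prodM (replicate k b)) (prodM (replicate m b @ [c])))" by (rule rot[OF detsq])
  then have "scal g l (prodM (replicate (k + m) b @ [c]))"
    by (simp add: prodM_append[symmetric] replicate_add)
  then show ?thesis using case_bd[of "k + m" g l b c] assms(1) by simp
qed

lemma case4: assumes "1 \<le> m" "scal g l (prodM (concat (replicate m [b, d]) @ [c] @ concat (replicate k [b, d])))"
  shows "g dvd (b - d)"
proof -
  have "scal g l (mm (prodM (concat (replicate m [b, d]) @ [c])) (prodM (concat (replicate k [b, d]))))"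
    using assms(2) by (simp add: prodM_append[symmetric])
  then have "scal g l (mm (prodM (concat (replicate k [b, d]))) (prodM (concat (replicate m [b, d]) @ [c])))" by (rule rot[OF detsq])
  then have "scal g l (prodM (concat (replicate (k + m) [b, d]) @ [c]))"
    by (simp add: prodM_append[symmetric] replicate_add)
  then show ?thesis using case_bdc[of "k + m" g l b d c] assms(1) by simp
qed



lemma fabs_ptf_unit:
  assumes "u \<noteq> 0" "degree u = 0"
  shows "fabs (poly_to_fls (u * z :: 'a::{field,finite} poly)) = fabs (poly_to_fls z)"
  using assms by (simp add: fabs_ptf degree_mult_eq)

lemma height_char:
  fixes x :: "'a::{field,finite} fls"
  assumes ir: "irr x" and deg: "degree Pn = 2" and prim: "primitive Pn"
    and lc: "lead_coeff (lead_coeff Pn) = 1" and r: "ev Pn x = 0"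
  shows "height x = Max ((\<lambda>i. fabs (poly_to_fls (coeff Pn i))) ` {..degree Pn})"
  unfolding height_def
proof (rule the_equality)
  have "is_minpoly x Pn"
    unfolding is_minpoly_def using deg lc r irreducible_Pn[OF ir deg prim r] prim
    by (simp add: ev_def primitive_def)
  then show "\<exists>P. is_minpoly x P \<and> Max ((\<lambda>i. fabs (poly_to_fls (coeff Pn i))) ` {..degree Pn})
        = Max ((\<lambda>i. fabs (poly_to_fls (coeff P i))) ` {..degree P})" by blast
next
  fix h assume "\<exists>P. is_minpoly x P \<and> h = Max ((\<lambda>i. fabs (poly_to_fls (coeff P i))) ` {..degree P})"
  then obtain P where P: "is_minpoly x P" "h = Max ((\<lambda>i. fabs (poly_to_fls (coeff P i))) ` {..degree P})" by blast
  have "irreducible P" "ev P x = 0" using P(1) by (auto simp: is_minpoly_def ev_def)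
  then obtain u where u: "u \<noteq> 0" "degree u = 0" "P = Pn * [:u:]" using assoc_root[OF ir deg prim r] by blast
  have Pe: "P = smult u Pn" using u(3) by simp
  have dP: "degree P = degree Pn" using Pe u(1) by simp
  have "fabs (poly_to_fls (coeff P i)) = fabs (poly_to_fls (coeff Pn i))" for i
    using Pe fabs_ptf_unit[OF u(1,2)] by simp
  then show "h = Max ((\<lambda>i. fabs (poly_to_fls (coeff Pn i))) ` {..degree Pn})" using P(2) dP by simp
qed

lemma dmul: "degree a \<le> m \<Longrightarrow> degree b \<le> k \<Longrightarrow> degree (a * b) \<le> m + k"
  by (meson add_mono degree_mult_le order_trans)
lemma dadd: "degree a \<le> m \<Longrightarrow> degree b \<le> m \<Longrightarrow> degree (a + b) \<le> m"
  by (meson degree_add_le)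
lemma ddiff: "degree a \<le> m \<Longrightarrow> degree b \<le> m \<Longrightarrow> degree (a - b :: 'a::ab_group_add poly) \<le> m"
  by (meson degree_diff_le)
lemma dadd_eq: "b = 0 \<or> degree b < degree a \<Longrightarrow> degree (a + b) = degree a"
  by (auto simp: degree_add_eq_left)
lemma ddiff_eq: "b = 0 \<or> degree b < degree a \<Longrightarrow> degree (a - b :: 'a::ab_group_add poly) = degree a"
  using dadd_eq[of "-b" a] by auto

lemma word_valid:
  assumes "1 \<le> n" "\<forall>i. 1 \<le> i \<and> i \<le> n - 1 \<longrightarrow> 1 \<le> degree (a i)" "1 \<le> degree c"
    "W \<noteq> []" "\<forall>w\<in>set W. 1 \<le> degree w"
  shows "valid (cf_word a n c W)"
  unfolding valid_def
proof (intro allI impI)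
  fix i :: nat assume i: "1 \<le> i"
  show "1 \<le> degree (cf_word a n c W i)"
  proof (cases "i < n")
    case True then show ?thesis using assms i by (simp add: cf_word_def)
  next
    case False
    then show ?thesis using assms i by (auto simp: cf_word_def)
  qed
qed

lemma word_shift: "(\<lambda>i. cf_word a n c W (Suc n + i)) = (\<lambda>i. W ! (i mod length W))"
  by (rule ext) (simp add: cf_word_def)

lemma per_shift: "W \<noteq> [] \<Longrightarrow> (\<lambda>i. (\<lambda>j. W ! (j mod length W)) (Suc (length W - 1) + i)) = (\<lambda>i. W ! (i mod length W))"
  by (rule ext) simp

lemma quad_id:
  fixes ua rb pz pa pb qa qb xx :: "'b::comm_ring_1"
  shows "(ua*pb*pb - rb*pb*pa - pz*pa*pa) + xx*(rb*(pb*qa + qb*pa) - ua*pb*qb - ua*pb*qb + pz*pa*qa + pz*pa*qa)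
        + xx*xx*(ua*qb*qb - rb*qb*qa - pz*qa*qa)
       = ua*(pb - qb*xx)*(pb - qb*xx) + rb*(pb - qb*xx)*(qa*xx - pa) - pz*(qa*xx - pa)*(qa*xx - pa)"
  by (simp add: algebra_simps)

lemma back_id1:
  fixes ua rb pz pa pb qa qb :: "'b::comm_ring_1"
  shows "(ua*qb*qb - rb*qb*qa - pz*qa*qa)*pa*pa + (rb*(pb*qa + qb*pa) - ua*pb*qb - ua*pb*qb + pz*pa*qa + pz*pa*qa)*pa*qa
        + (ua*pb*pb - rb*pb*pa - pz*pa*pa)*qa*qa = ua*(pa*qb - pb*qa)*(pa*qb - pb*qa)"
  by (simp add: algebra_simps)
lemma back_id2:
  fixes ua rb pz pa pb qa qb :: "'b::comm_ring_1"
  shows "(ua*qb*qb - rb*qb*qa - pz*qa*qa)*pb*pb + (rb*(pb*qa + qb*pa) - ua*pb*qb - ua*pb*qb + pz*pa*qa + pz*pa*qa)*pb*qb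
        + (ua*pb*pb - rb*pb*pa - pz*pa*pa)*qb*qb = - pz*(pa*qb - pb*qa)*(pa*qb - pb*qa)"
  by (simp add: algebra_simps)
lemma back_id3:
  fixes ua rb pz pa pb qa qb :: "'b::comm_ring_1"
  shows "(ua*qb*qb - rb*qb*qa - pz*qa*qa)*(pa+pb)*(pa+pb) + (rb*(pb*qa + qb*pa) - ua*pb*qb - ua*pb*qb + pz*pa*qa + pz*pa*qa)*(pa+pb)*(qa+qb)
        + (ua*pb*pb - rb*pb*pa - pz*pa*pa)*(qa+qb)*(qa+qb) = (ua + rb - pz)*(pa*qb - pb*qa)*(pa*qb - pb*qa)"
  by (simp add: algebra_simps)



lemma dadd_nz: "(a::'b::ab_group_add poly) \<noteq> 0 \<Longrightarrow> b = 0 \<or> degree b < degree a \<Longrightarrow> a + b \<noteq> 0"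
proof
  assume a: "a \<noteq> 0" "b = 0 \<or> degree b < degree a" "a + b = 0"
  then have "b = - a" by (simp add: add_eq_0_iff)
  then show False using a by auto
qed

lemma main:
  fixes a :: "nat \<Rightarrow> 'a::{field,finite} poly" and c e :: "'a poly" and W :: "'a poly list"
  assumes n1: "1 \<le> n" and ha: "\<forall>i. 1 \<le> i \<and> i \<le> n - 1 \<longrightarrow> 1 \<le> degree (a i)" and hc: "1 \<le> degree c"
    and hW: "W \<noteq> []" and hWd: "\<forall>w\<in>set W. 1 \<le> degree w" and hl: "last W \<noteq> c"
    and he: "e \<noteq> 0" and hg: "\<forall>g l. scal g l (prodM W) \<longrightarrow> g dvd e"
  defines "A \<equiv> cf_word a n c W"
  shows "height (cf_value A) \<le> fabs (poly_to_fls (cf_den A n * cf_den A (n + length W)))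
       \<and> fabs (poly_to_fls (cf_den A n * cf_den A (n + length W)))
          \<le> real (card (UNIV::'a set)) ^ (degree c + degree (last W) + degree e) * height (cf_value A)"
proof -
  define L where "L = length W"
  define B where "B = (\<lambda>i. W ! (i mod L))"
  define Qc where "Qc = real (card (UNIV::'a set))"
  have Qc1: "1 \<le> Qc" using card_ge2[where 'a='a] by (simp add: Qc_def)
  have L1: "1 \<le> L" using hW by (cases W) (auto simp: L_def)
  obtain m where nm: "n = Suc m" using n1 by (cases n) auto
  obtain j where Lj: "L = Suc j" using L1 by (cases L) auto
  have vA: "valid A" unfolding A_def by (rule word_valid[OF n1 ha hc hW hWd])
  have A0: "A 0 = 0" by (simp add: A_def cf_word_def)
  have An: "A n = c" using n1 by (simp add: A_def cf_word_def)
  have AB: "(\<lambda>i. A (Suc n + i)) = B" unfolding A_def B_def L_def by (rule word_shift)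
  have Bd: "\<forall>i. 1 \<le> degree (B i)" using hWd hW by (simp add: B_def L_def)
  have vB: "valid B" using Bd by (simp add: valid_def)
  have BB: "(\<lambda>i. B (Suc j + i)) = B"
  proof (rule ext)
    fix i
    have "(L + i) mod L = i mod L" by (rule mod_add_self1)
    then show "B (Suc j + i) = B i" unfolding B_def using Lj by simp
  qed
  have BW: "map B [0..<Suc j] = W"
  proof -
    have "map B [0..<Suc j] = map (\<lambda>i. W ! i) [0..<length W]"
      using Lj by (intro map_cong) (auto simp: B_def L_def)
    then show ?thesis by (simp add: map_nth)
  qed
  have Blast: "B j = last W" using Lj hW by (simp add: B_def L_def last_conv_nth)

  define p where "p = cf_P A (Suc n)"
  define p' where "p' = cf_P A n"
  define q where "q = cf_Q A (Suc n)"
  define q' where "q' = cf_Q A n"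
  define q'' where "q'' = cf_Q A m"
  define P1 where "P1 = cf_P B (Suc j)"
  define P0 where "P0 = cf_P B j"
  define Q1 where "Q1 = cf_Q B (Suc j)"
  define Q0 where "Q0 = cf_Q B j"
  define \<alpha> where "\<alpha> = cflim A"
  define \<gamma> where "\<gamma> = cflim B"
  have rel1: "\<alpha> * (poly_to_fls q * \<gamma> + poly_to_fls q') = poly_to_fls p * \<gamma> + poly_to_fls p'"
    using cf_rel[OF vA, of n] unfolding AB by (simp add: \<alpha>_def \<gamma>_def p_def p'_def q_def q'_def del: cf_P.simps cf_Q.simps)
  have rel2: "\<gamma> * (poly_to_fls Q1 * \<gamma> + poly_to_fls Q0) = poly_to_fls P1 * \<gamma> + poly_to_fls P0"
    using cf_rel[OF vB, of j] unfolding BB by (simp add: \<gamma>_def P1_def P0_def Q1_def Q0_def del: cf_P.simps cf_Q.simps)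
  have irra: "irr \<alpha>" unfolding irr_def \<alpha>_def using cflim_irrational[OF vA] by blast
  have q0: "q \<noteq> 0" unfolding q_def by (rule cf_Q_nz[OF vA]) simp
  have q'0: "q' \<noteq> 0" unfolding q'_def by (rule cf_Q_nz[OF vA]) (use n1 in simp)
  have w0: "poly_to_fls q * \<alpha> - poly_to_fls p \<noteq> 0" using irra q0 unfolding irr_def by auto
  have uw: "poly_to_fls p' - poly_to_fls q' * \<alpha> = \<gamma> * (poly_to_fls q * \<alpha> - poly_to_fls p)"
    using rel1 by (simp add: algebra_simps)
  define R where "R = Q0 - P1"
  define c0 where "c0 = Q1*p'*p' - R*p'*p - P0*p*p"
  define c1 where "c1 = R*(p'*q + q'*p) - Q1*p'*q' - Q1*p'*q' + P0*p*q + P0*p*q"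
  define c2 where "c2 = Q1*q'*q' - R*q'*q - P0*q*q"
  have evP: "poly_to_fls c0 + \<alpha> * poly_to_fls c1 + \<alpha> * \<alpha> * poly_to_fls c2 = 0"
  proof -
    let ?u = "poly_to_fls p' - poly_to_fls q' * \<alpha>" and ?w = "poly_to_fls q * \<alpha> - poly_to_fls p"
    let ?Q1 = "poly_to_fls Q1" and ?R = "poly_to_fls R" and ?P0 = "poly_to_fls P0" and ?p = "poly_to_fls p"
      and ?p' = "poly_to_fls p'" and ?q = "poly_to_fls q" and ?q' = "poly_to_fls q'"
    have "poly_to_fls c0 + \<alpha> * poly_to_fls c1 + \<alpha> * \<alpha> * poly_to_fls c2
        = (?Q1*?p'*?p' - ?R*?p'*?p - ?P0*?p*?p) + \<alpha>*(?R*(?p'*?q + ?q'*?p) - ?Q1*?p'*?q' - ?Q1*?p'*?q' + ?P0*?p*?q + ?P0*?p*?q)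
        + \<alpha>*\<alpha>*(?Q1*?q'*?q' - ?R*?q'*?q - ?P0*?q*?q)"
      by (simp only: c0_def c1_def c2_def ptf_add ptf_diff ptf_mult)
    also have "\<dots> = ?Q1 * ?u * ?u + ?R * ?u * ?w - ?P0 * ?w * ?w"
      by (rule quad_id)
    also have "\<dots> = ?w * ?w * (\<gamma> * (poly_to_fls Q1 * \<gamma> + poly_to_fls Q0) - poly_to_fls P1 * \<gamma> - poly_to_fls P0)"
      unfolding uw by (simp add: R_def ptf_diff algebra_simps)
    also have "\<dots> = 0" using rel2 by simp
    finally show ?thesis .
  qed
  define x where "x = degree q'"
  define y where "y = degree q"
  define D where "D = degree P1"
  define dw where "dw = degree (B j)"
  define ee where "ee = degree (B j - c)"
  have qrec: "q = c * q' + q''"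
    unfolding q_def q'_def q''_def nm using An nm by simp
  have q''lt: "q'' = 0 \<or> degree q'' < x"
    unfolding q''_def x_def q'_def nm using cf_Q_deg_lt[OF vA, of m] by simp
  have dcq: "degree (c * q') = degree c + x" using hc q'0 by (subst degree_mult_eq) (auto simp: x_def)
  have yx: "y = x + degree c"
  proof -
    have "q'' = 0 \<or> degree q'' < degree (c * q')" using q''lt dcq by auto
    then show ?thesis unfolding y_def qrec using dcq dadd_eq[of q'' "c * q'"] by simp
  qed
  have dp: "degree p \<le> y" "degree p' \<le> x"
    using cf_P_le_Q[OF vA A0, of m] by (auto simp: p_def p'_def y_def x_def q_def q'_def nm)
  have sumP: "degree (cf_P B k) = (\<Sum>i<k. degree (B i))" for k using cf_P_deg[OF Bd] .
  have sumQ: "degree (cf_Q B k) = (\<Sum>i\<in>{1..<k}. degree (B i))" for k using cf_Q_deg[OF vB] .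
  have split0: "(\<Sum>i<Suc k. degree (B i)) = degree (B 0) + (\<Sum>i\<in>{1..<Suc k}. degree (B i))" for k
    by (simp add: atLeast0LessThan[symmetric] sum.atLeast_Suc_lessThan)
  have DP0: "D = degree P0 + dw" unfolding D_def P1_def P0_def dw_def sumP by simp
  have dQ1: "degree Q1 < D" unfolding D_def P1_def Q1_def sumP sumQ split0 using Bd[rule_format, of 0] by simp
  have dQ0: "Q0 = 0 \<or> degree Q0 < degree P0"
  proof (cases j)
    case 0 then show ?thesis by (simp add: Q0_def)
  next
    case (Suc j')
    then show ?thesis unfolding Q0_def P0_def sumP sumQ using split0[of j'] Bd[rule_format, of 0] by simp
  qed
  have P0nz: "P0 \<noteq> 0" unfolding P0_def by (rule cf_P_nz[OF Bd])
  obtain Rr where Rr: "P1 = B j * P0 + Rr" "Rr = 0 \<or> degree Rr < degree P0"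
  proof (cases j)
    case 0 then show ?thesis using that[of 0] by (simp add: P1_def P0_def)
  next
    case (Suc j')
    have "degree (cf_P B j') < degree (cf_P B (Suc j'))" unfolding sumP using Bd[rule_format, of j'] by simp
    then show ?thesis using that[of "cf_P B j'"] by (simp add: P1_def P0_def Suc)
  qed
  have wl: "B j \<noteq> c" using Blast hl by simp
  have dwl: "dw \<le> degree c + ee"
  proof -
    have "degree (B j) = degree ((B j - c) + c)" by simp
    also have "\<dots> \<le> max (degree (B j - c)) (degree c)" by (rule degree_add_le_max)
    finally show ?thesis unfolding dw_def ee_def by simp
  qed
  have eele: "ee \<le> dw + degree c"
    unfolding ee_def dw_def using degree_diff_le_max[of "B j" c] by simp
  have Pc: "P1 - c * P0 = (B j - c) * P0 + Rr" using Rr(1) by (simp add: algebra_simps)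
  have d1: "degree ((B j - c) * P0) = ee + degree P0" using wl P0nz by (simp add: degree_mult_eq ee_def)
  have nz1: "(B j - c) * P0 \<noteq> 0" using wl P0nz by simp
  have tdeg: "degree (P1 - c * P0) = ee + degree P0"
    unfolding Pc using d1 Rr(2) dadd_eq[of Rr "(B j - c) * P0"] by auto
  have tnz: "P1 - c * P0 \<noteq> 0" unfolding Pc by (rule dadd_nz[OF nz1]) (use Rr(2) d1 in auto)
  define T1 where "T1 = (P1 - c * P0) * q' - P0 * q''"
  have dT1a: "degree ((P1 - c * P0) * q') = ee + degree P0 + x" using tnz q'0 tdeg by (simp add: degree_mult_eq x_def)
  have nzT1a: "(P1 - c * P0) * q' \<noteq> 0" using tnz q'0 by simp
  have sm: "P0 * q'' = 0 \<or> degree (P0 * q'') < degree ((P1 - c * P0) * q')"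
    using q''lt P0nz dT1a degree_mult_le[of P0 q''] by auto
  have dT1: "degree T1 = ee + degree P0 + x" unfolding T1_def using ddiff_eq[OF sm] dT1a by simp
  have "(P1 - c * P0) * q' + (- (P0 * q'')) \<noteq> 0" by (rule dadd_nz[OF nzT1a]) (use sm in auto)
  then have nzT1: "T1 \<noteq> 0" unfolding T1_def by simp
  define h2 where "h2 = ee + degree P0 + x + y"
  have c2e: "c2 = (Q1*q'*q' - Q0*q'*q) + q * T1"
  proof -
    have "c2 = Q1*q'*q' - Q0*q'*q + P1*q'*q - P0*q*q" by (simp add: c2_def R_def algebra_simps)
    also have "\<dots> = Q1*q'*q' - Q0*q'*q + P1*q'*q - P0*(c*q' + q'')*q" by (simp only: qrec[symmetric])
    also have "\<dots> = (Q1*q'*q' - Q0*q'*q) + q * T1" by (simp add: T1_def algebra_simps)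
    finally show ?thesis .
  qed
  have dqT: "degree (q * T1) = h2" using q0 nzT1 dT1 by (simp add: degree_mult_eq h2_def y_def)
  have nzqT: "q * T1 \<noteq> 0" using q0 nzT1 by simp
  have small: "degree (Q1*q'*q' - Q0*q'*q) < h2"
  proof -
    have a: "degree (Q1*q'*q') < h2"
    proof -
      have "degree (Q1*q'*q') \<le> degree Q1 + x + x" by (intro dmul) (auto simp: x_def)
      also have "\<dots> < h2" using dQ1 DP0 dwl yx by (simp add: h2_def)
      finally show ?thesis .
    qed
    have b: "degree (Q0*q'*q) < h2"
    proof (cases "Q0 = 0")
      case False
      then have "degree Q0 < degree P0" using dQ0 by simp
      have "degree (Q0*q'*q) \<le> degree Q0 + x + y" by (intro dmul) (auto simp: x_def y_def)
      also have "\<dots> < h2" using \<open>degree Q0 < degree P0\<close> by (simp add: h2_def)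
      finally show ?thesis .
    qed (use a in simp)
    show ?thesis using a b by (intro degree_diff_less)
  qed
  have dc2: "degree c2 = h2" unfolding c2e using dadd_eq[of "Q1*q'*q' - Q0*q'*q" "q * T1"] small dqT
    by (simp add: add.commute)
  have c2nz: "c2 \<noteq> 0" unfolding c2e using dadd_nz[OF nzqT, of "Q1*q'*q' - Q0*q'*q"] small dqT by (simp add: add.commute)
  have xy: "x \<le> y" using yx by simp
  have dP1: "degree P1 \<le> D" by (simp add: D_def)
  have dP0: "degree P0 \<le> D" using DP0 by simp
  have dQ1': "degree Q1 \<le> D" using dQ1 by simp
  have dR: "degree R \<le> D" unfolding R_def by (rule ddiff) (use dQ0 dP0 dP1 in auto)
  have ub2: "degree c2 \<le> 2 * y + D" using dc2 eele DP0 yx by (simp add: h2_def)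
  have ub1: "degree c1 \<le> 2 * y + D"
  proof -
    have a1: "degree (p'*q + q'*p) \<le> x + y"
      by (intro dadd dmul) (use dp xy in \<open>auto simp: x_def y_def\<close>)
    have t1: "degree (R*(p'*q + q'*p)) \<le> 2 * y + D" using dmul[OF dR a1] xy by simp
    have t2: "degree (Q1*p'*q') \<le> 2 * y + D" using dmul[OF dmul[OF dQ1' dp(2)], of q' x] xy by (simp add: x_def)
    have t3: "degree (P0*p*q) \<le> 2 * y + D" using dmul[OF dmul[OF dP0 dp(1)], of q y] by (simp add: y_def)
    show ?thesis unfolding c1_def by (intro dadd ddiff t1 t2 t3)
  qed
  have ub0: "degree c0 \<le> 2 * y + D"
  proof -
    have t1: "degree (Q1*p'*p') \<le> 2 * y + D" using dmul[OF dmul[OF dQ1' dp(2)] dp(2)] xy by simp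
    have t2: "degree (R*p'*p) \<le> 2 * y + D" using dmul[OF dmul[OF dR dp(2)] dp(1)] xy by simp
    have t3: "degree (P0*p*p) \<le> 2 * y + D" using dmul[OF dmul[OF dP0 dp(1)] dp(1)] by simp
    show ?thesis unfolding c0_def by (intro ddiff t1 t2 t3)
  qed
  have h2low: "2 * y + D \<le> h2 + dw + degree c" using DP0 yx by (simp add: h2_def)
  have qL: "cf_den A (n + length W) = q * P1 + q' * Q1"
  proof -
    have "cf_den A (n + length W) = cf_Q A (Suc n + Suc j)" using Lj by (simp add: cf_den_def L_def)
    also have "\<dots> = q * P1 + q' * Q1"
      using cf_shift[of A n j] unfolding AB by (simp add: q_def q'_def P1_def Q1_def del: cf_P.simps cf_Q.simps)
    finally show ?thesis .
  qed
  have P1nz: "P1 \<noteq> 0" unfolding P1_def by (rule cf_P_nz[OF Bd])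
  have dqP: "degree (q * P1) = y + D" using q0 P1nz by (simp add: degree_mult_eq y_def D_def)
  have qLd: "degree (cf_den A (n + length W)) = y + D"
  proof -
    have "q' * Q1 = 0 \<or> degree (q' * Q1) < degree (q * P1)"
      using dqP dQ1 xy degree_mult_le[of q' Q1] by (auto simp: x_def)
    then show ?thesis unfolding qL using dadd_eq dqP by metis
  qed
  have qLnz: "cf_den A (n + length W) \<noteq> 0" unfolding cf_den_def by (rule cf_Q_nz[OF vA]) simp
  have Bval: "fabs (poly_to_fls (cf_den A n * cf_den A (n + length W))) = Qc ^ (2 * y + D)"
  proof -
    have "cf_den A n = q" by (simp add: cf_den_def q_def)
    then show ?thesis using q0 qLnz qLd by (simp add: fabs_ptf degree_mult_eq Qc_def y_def mult_2 add.assoc)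
  qed
  define S where "S = {d. d dvd c0 \<and> d dvd c1 \<and> d dvd c2}"
  have S1: "1 \<in> S" by (simp add: S_def)
  have Sb: "\<forall>d. d \<in> S \<longrightarrow> degree d < Suc (degree c2)"
    using c2nz by (auto simp: S_def less_Suc_eq_le intro: dvd_imp_degree_le)
  obtain g where gS: "g \<in> S" and gmax: "\<forall>d. d \<in> S \<longrightarrow> degree d \<le> degree g"
    using ex_has_greatest_nat[of "\<lambda>d. d \<in> S" 1 degree "Suc (degree c2)"] S1 Sb by blast
  have gd: "g dvd c0" "g dvd c1" "g dvd c2" using gS by (auto simp: S_def)
  have g0: "g \<noteq> 0" using gd(3) c2nz by auto
  define d0 where "d0 = c0 div g"
  define d1 where "d1 = c1 div g"
  define d2 where "d2 = c2 div g"
  have cd: "c0 = g * d0" "c1 = g * d1" "c2 = g * d2" using gd by (simp_all add: d0_def d1_def d2_def)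
  have d2nz: "d2 \<noteq> 0" using cd(3) c2nz by auto
  have dd2: "degree d2 = h2 - degree g" using cd(3) g0 d2nz dc2 by (simp add: degree_mult_eq)
  have dgh: "degree g \<le> h2" using cd(3) g0 d2nz dc2 by (simp add: degree_mult_eq)
  define k where "k = inverse (lead_coeff d2)"
  have k0: "k \<noteq> 0" using d2nz by (simp add: k_def)
  define Pn where "Pn = [:smult k d0, smult k d1, smult k d2:]"
  have cPn: "coeff Pn 0 = smult k d0" "coeff Pn 1 = smult k d1" "coeff Pn 2 = smult k d2"
    by (simp_all add: Pn_def numeral_2_eq_2)
  have degPn: "degree Pn = 2" using k0 d2nz by (simp add: Pn_def numeral_2_eq_2)
  have lcPn: "lead_coeff (lead_coeff Pn) = 1" using degPn cPn(3) k0 d2nz by (simp add: k_def)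
  have primPn: "primitive Pn"
    unfolding primitive_def
  proof (intro allI impI)
    fix h assume h: "\<forall>i. h dvd coeff Pn i"
    have hd: "h dvd d0" "h dvd d1" "h dvd d2" using h[rule_format, of 0] h[rule_format, of 1] h[rule_format, of 2] cPn k0
      by (simp_all add: dvd_smult_iff)
    have "h * g \<in> S" unfolding S_def using hd cd by (auto simp: mult.commute[of h g] mult_dvd_mono)
    then have "degree (h * g) \<le> degree g" using gmax by blast
    moreover have "h \<noteq> 0" using hd(3) d2nz by auto
    ultimately have "degree h = 0" using g0 by (simp add: degree_mult_eq)
    then show "is_unit h" using \<open>h \<noteq> 0\<close> is_unit_iff_degree by blast
  qed
  have evPn: "ev Pn \<alpha> = 0"
  proof -
    have "poly_to_fls g * (poly_to_fls d0 + \<alpha> * poly_to_fls d1 + \<alpha> * \<alpha> * poly_to_fls d2) = 0"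
      using evP unfolding cd by (simp add: ptf_mult algebra_simps)
    then have z: "poly_to_fls d0 + \<alpha> * poly_to_fls d1 + \<alpha> * \<alpha> * poly_to_fls d2 = 0" using g0 by simp
    have "ev Pn \<alpha> = fls_const k * (poly_to_fls d0 + \<alpha> * poly_to_fls d1 + \<alpha> * \<alpha> * poly_to_fls d2)"
      unfolding Pn_def ev_3 by (simp add: ptf_smult algebra_simps)
    then show ?thesis using z by simp
  qed
  have Hval: "height (cf_value A) = Max ((\<lambda>i. fabs (poly_to_fls (coeff Pn i))) ` {..2})"
    using height_char[OF irra degPn primPn lcPn evPn] cf_value_eq[OF vA] degPn by (simp add: \<alpha>_def)
  have fabs_k: "fabs (poly_to_fls (smult k z)) = fabs (poly_to_fls z)" for z
    using k0 by (simp add: fabs_ptf)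
  have vals: "fabs (poly_to_fls (coeff Pn i)) \<le> Qc ^ (2 * y + D)" if "i \<le> 2" for i
  proof -
    have "\<exists>ci di. (ci = c0 \<and> di = d0 \<or> ci = c1 \<and> di = d1 \<or> ci = c2 \<and> di = d2) \<and> coeff Pn i = smult k di"
      using that cPn by (cases i; cases "i - 1") (auto simp: numeral_2_eq_2)
    then obtain ci di where cdi: "ci = c0 \<and> di = d0 \<or> ci = c1 \<and> di = d1 \<or> ci = c2 \<and> di = d2" "coeff Pn i = smult k di" by blast
    have ce: "ci = g * di" and ub: "degree ci \<le> 2 * y + D" using cdi(1) cd ub0 ub1 ub2 by auto
    have "degree di \<le> 2 * y + D"
    proof (cases "di = 0")
      case False then show ?thesis using ce g0 ub by (simp add: degree_mult_eq)
    qed simp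
    then show ?thesis unfolding cdi(2) fabs_k using Qc1 by (auto simp: fabs_ptf Qc_def intro: power_increasing)
  qed
  have Hup: "height (cf_value A) \<le> Qc ^ (2 * y + D)"
    unfolding Hval by (subst Max_le_iff) (use vals in auto)
  have Hlow: "Qc ^ (h2 - degree g) \<le> height (cf_value A)"
  proof -
    have "fabs (poly_to_fls (coeff Pn 2)) = Qc ^ (h2 - degree g)"
      unfolding cPn fabs_k using d2nz dd2 by (simp add: fabs_ptf Qc_def)
    moreover have "fabs (poly_to_fls (coeff Pn 2)) \<le> Max ((\<lambda>i. fabs (poly_to_fls (coeff Pn i))) ` {..2})"
      by (intro Max_ge) auto
    ultimately show ?thesis unfolding Hval by simp
  qed
  define eps where "eps = p * q' - p' * q"
  have eps2: "eps * eps = 1"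
  proof -
    have "eps = (-1) ^ Suc n" using cf_det[of A n] by (simp add: eps_def p_def p'_def q_def q'_def del: cf_P.simps cf_Q.simps)
    then show ?thesis by (simp add: power_mult_distrib[symmetric] power_add[symmetric] mult_2[symmetric] power_mult)
  qed
  have gQ1: "g dvd Q1"
  proof -
    have "c2*p*p + c1*p*q + c0*q*q = Q1*eps*eps"
      unfolding c0_def c1_def c2_def eps_def by (rule back_id1)
    moreover have "g dvd c2*p*p + c1*p*q + c0*q*q" using gd by (intro dvd_add dvd_mult2) auto
    ultimately show ?thesis using eps2 by (simp add: mult.assoc)
  qed
  have gP0: "g dvd P0"
  proof -
    have "c2*p'*p' + c1*p'*q' + c0*q'*q' = - P0*eps*eps"
      unfolding c0_def c1_def c2_def eps_def by (rule back_id2)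
    moreover have "g dvd c2*p'*p' + c1*p'*q' + c0*q'*q'" using gd by (intro dvd_add dvd_mult2) auto
    ultimately show ?thesis using eps2 by (simp add: mult.assoc)
  qed
  have gR: "g dvd R"
  proof -
    have "c2*(p+p')*(p+p') + c1*(p+p')*(q+q') + c0*(q+q')*(q+q') = (Q1 + R - P0)*eps*eps"
      unfolding c0_def c1_def c2_def eps_def by (rule back_id3)
    moreover have "g dvd c2*(p+p')*(p+p') + c1*(p+p')*(q+q') + c0*(q+q')*(q+q')" using gd by (intro dvd_add dvd_mult2) auto
    ultimately have "g dvd Q1 + R - P0" using eps2 by (simp add: mult.assoc)
    then have "g dvd (Q1 + R - P0) - Q1 + P0" using dvd_add[OF dvd_diff[OF _ gQ1] gP0] by blast
    then show ?thesis by simp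
  qed
  have "prodM W = (P1, P0, Q1, Q0)" using prodM_cf[of B j] BW by (simp add: P1_def P0_def Q1_def Q0_def)
  then have "scal g P1 (prodM W)" using gP0 gQ1 gR by (simp add: scal_def R_def)
  then have "g dvd e" using hg by blast
  then have dge: "degree g \<le> degree e" using he by (rule dvd_imp_degree_le)
  have "Qc ^ (2 * y + D) \<le> Qc ^ (degree c + dw + degree e) * Qc ^ (h2 - degree g)"
  proof -
    have "2 * y + D \<le> degree c + dw + degree e + (h2 - degree g)" using h2low dge dgh by linarith
    then have "Qc ^ (2 * y + D) \<le> Qc ^ (degree c + dw + degree e + (h2 - degree g))" using Qc1 by (rule power_increasing)
    then show ?thesis by (simp add: power_add)
  qed
  also have "\<dots> \<le> Qc ^ (degree c + dw + degree e) * height (cf_value A)"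
    using Hlow Qc1 by (intro mult_left_mono) auto
  finally show ?thesis using Hup Bval by (simp add: Qc_def dw_def Blast)
qed



lemma fin_gen:
  fixes H Bq Qc :: real
  assumes "H \<le> Bq" "Bq \<le> Qc ^ K * H" "0 < Bq" "K \<le> M" "1 \<le> Qc"
  shows "\<bar>H\<bar> \<le> Qc ^ M * \<bar>Bq\<bar> \<and> \<bar>Bq\<bar> \<le> Qc ^ M * \<bar>H\<bar>"
proof -
  have QK: "0 < Qc ^ K" using assms(5) by simp
  have H0: "0 < H"
  proof (rule ccontr)
    assume "\<not> 0 < H"
    then have "Qc ^ K * H \<le> 0" using QK by (simp add: mult_nonneg_nonpos less_imp_le)
    then show False using assms(2,3) by linarith
  qed
  have QM: "Qc ^ K \<le> Qc ^ M" "1 \<le> Qc ^ M" using assms(4,5) by (auto intro: power_increasing one_le_power)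
  have "1 * Bq \<le> Qc ^ M * Bq" using mult_right_mono[OF QM(2), of Bq] assms(3) by simp
  then have "H \<le> Qc ^ M * Bq" using assms(1) by simp
  moreover have "Qc ^ K * H \<le> Qc ^ M * H" using mult_right_mono[OF QM(1), of H] H0 by simp
  then have "Bq \<le> Qc ^ M * H" using assms(2) by simp
  ultimately show ?thesis using H0 assms(3) by simp
qed

lemma word_set_deg: "\<forall>w\<in>set W. w \<in> X \<Longrightarrow> \<forall>w\<in>X. 1 \<le> degree w \<Longrightarrow> \<forall>w\<in>set W. 1 \<le> degree w" by blast

theorem lemma4p6:
  fixes b c d :: "'a::{field,finite} poly"
  assumes "b \<noteq> c" "b \<noteq> d" "c \<noteq> d"
    and "degree b \<ge> 1" "degree c \<ge> 1" "degree d \<ge> 1"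
  shows
   "(\<exists>C>0. \<forall>(n::nat) (a::nat \<Rightarrow> 'a poly).
      n \<ge> 1 \<and> (\<forall>i. 1 \<le> i \<and> i \<le> n - 1 \<longrightarrow> degree (a i) \<ge> 1) \<longrightarrow>
      (let A = cf_word a n c [b];
           H = height (cf_value A); B = fabs (poly_to_fls (cf_den A n)) ^ 2
       in \<bar>H\<bar> \<le> C * \<bar>B\<bar> \<and> \<bar>B\<bar> \<le> C * \<bar>H\<bar>))
  \<and> (\<exists>C>0. \<forall>(n::nat) (m::nat) (a::nat \<Rightarrow> 'a poly).
      n \<ge> 1 \<and> m \<ge> 1 \<and> (\<forall>i. 1 \<le> i \<and> i \<le> n - 1 \<longrightarrow> degree (a i) \<ge> 1) \<longrightarrow>
      (let A = cf_word a n c (replicate m b @ [d]);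
           H = height (cf_value A);
           B = fabs (poly_to_fls (cf_den A n * cf_den A (n + m + 1)))
       in \<bar>H\<bar> \<le> C * \<bar>B\<bar> \<and> \<bar>B\<bar> \<le> C * \<bar>H\<bar>))
  \<and> (\<exists>C>0. \<forall>(n::nat) (m::nat) (l::nat) (a::nat \<Rightarrow> 'a poly).
      n \<ge> 1 \<and> m \<ge> 1 \<and> l \<ge> 1 \<and> (\<forall>i. 1 \<le> i \<and> i \<le> n - 1 \<longrightarrow> degree (a i) \<ge> 1) \<longrightarrow>
      (let A = cf_word a n c (replicate m b @ [c] @ replicate l b);
           H = height (cf_value A);
           B = fabs (poly_to_fls (cf_den A n * cf_den A (n + m + l + 1)))
       in \<bar>H\<bar> \<le> C * \<bar>B\<bar> \<and> \<bar>B\<bar> \<le> C * \<bar>H\<bar>))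
  \<and> (\<exists>C>0. \<forall>(n::nat) (m::nat) (l::nat) (a::nat \<Rightarrow> 'a poly).
      n \<ge> 1 \<and> m \<ge> 1 \<and> l \<ge> 1 \<and> (\<forall>i. 1 \<le> i \<and> i \<le> n - 1 \<longrightarrow> degree (a i) \<ge> 1) \<longrightarrow>
      (let A = cf_word a n c (concat (replicate m [b, d]) @ [c] @ concat (replicate l [b, d]));
           H = height (cf_value A);
           B = fabs (poly_to_fls (cf_den A n * cf_den A (n + 2 * m + 2 * l + 1)))
       in \<bar>H\<bar> \<le> C * \<bar>B\<bar> \<and> \<bar>B\<bar> \<le> C * \<bar>H\<bar>))"
proof -
  define Qc where "Qc = real (card (UNIV::'a set))"
  have Qc1: "1 \<le> Qc" using card_ge2[where 'a='a] by (simp add: Qc_def)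
  define M where "M = 2 * (degree b + degree c + degree d)"
  have Cpos: "0 < Qc ^ M" using Qc1 by simp
  have bd0: "b - d \<noteq> 0" and bc0: "b - c \<noteq> 0" using assms by auto
  have dbd: "degree (b - d) \<le> degree b + degree d" using degree_diff_le_max[of b d] by simp
  have dbc: "degree (b - c) \<le> degree b + degree c" using degree_diff_le_max[of b c] by simp
  have pos: "0 < fabs (poly_to_fls (cf_den (cf_word a n c W) n * cf_den (cf_word a n c W) k))"
    if "valid (cf_word a n c W)" for a :: "nat \<Rightarrow> 'a poly" and n W k
  proof -
    have "cf_den (cf_word a n c W) n \<noteq> 0" "cf_den (cf_word a n c W) k \<noteq> 0"
      unfolding cf_den_def by (rule cf_Q_nz[OF that], simp)+
    then show ?thesis using card_ge2[where 'a='a] by (simp add: fabs_ptf)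
  qed
  show ?thesis
  proof (intro conjI)
    show "\<exists>C>0. \<forall>(n::nat) (a::nat \<Rightarrow> 'a poly).
      n \<ge> 1 \<and> (\<forall>i. 1 \<le> i \<and> i \<le> n - 1 \<longrightarrow> degree (a i) \<ge> 1) \<longrightarrow>
      (let A = cf_word a n c [b];
           H = height (cf_value A); B = fabs (poly_to_fls (cf_den A n)) ^ 2
       in \<bar>H\<bar> \<le> C * \<bar>B\<bar> \<and> \<bar>B\<bar> \<le> C * \<bar>H\<bar>)"
    proof (intro exI[of _ "Qc ^ M"] conjI Cpos allI impI)
      fix n :: nat and a :: "nat \<Rightarrow> 'a poly"
      assume h: "n \<ge> 1 \<and> (\<forall>i. 1 \<le> i \<and> i \<le> n - 1 \<longrightarrow> degree (a i) \<ge> 1)"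
      define A where "A = cf_word a n c [b]"
      have hW: "\<forall>w\<in>set [b]. 1 \<le> degree w" using assms by simp
      have mn: "height (cf_value A) \<le> fabs (poly_to_fls (cf_den A n * cf_den A (n + 1)))
         \<and> fabs (poly_to_fls (cf_den A n * cf_den A (n + 1))) \<le> Qc ^ (degree c + degree b + degree 1) * height (cf_value A)"
        using main[of n a c "[b]" 1] h assms(1,5) hW case1 unfolding A_def Qc_def by auto
      have vA: "valid A" unfolding A_def by (rule word_valid) (use h assms in auto)
      have qn: "cf_den A n \<noteq> 0" unfolding cf_den_def by (rule cf_Q_nz[OF vA]) simp
      have rec: "cf_den A (n + 1) = b * cf_den A n + cf_Q A n"
        using h by (simp add: cf_den_def A_def cf_word_def)
      have "cf_Q A n = 0 \<or> degree (cf_Q A n) < degree (b * cf_den A n)"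
        using cf_Q_deg_lt[OF vA, of n] qn assms(4) by (subgoal_tac "b \<noteq> 0") (auto simp: cf_den_def degree_mult_eq)
      then have dq1: "degree (cf_den A (n + 1)) = degree b + degree (cf_den A n)"
        unfolding rec using dadd_eq qn assms(4) by (metis degree_mult_eq leading_coeff_0_iff not_one_le_zero degree_0)
      have q1: "cf_den A (n + 1) \<noteq> 0" unfolding cf_den_def by (rule cf_Q_nz[OF vA]) simp
      have Beq: "fabs (poly_to_fls (cf_den A n * cf_den A (n + 1))) = Qc ^ degree b * fabs (poly_to_fls (cf_den A n)) ^ 2"
        using qn q1 dq1 by (simp add: fabs_ptf degree_mult_eq Qc_def power_add power2_eq_square)
      let ?H = "height (cf_value A)" and ?B = "fabs (poly_to_fls (cf_den A n)) ^ 2"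
      have B0: "0 < ?B" using qn card_ge2[where 'a='a] by (simp add: fabs_ptf)
      have QB: "1 \<le> Qc ^ degree b" "Qc ^ degree b \<le> Qc ^ M" using Qc1 by (auto simp: M_def intro: power_increasing)
      have "Qc ^ degree b * ?B \<le> Qc ^ M * ?B" using mult_right_mono[OF QB(2)] B0 by simp
      then have H1: "?H \<le> Qc ^ M * ?B" using mn Beq by simp
      have Hpos: "0 < ?H"
      proof (rule ccontr)
        assume "\<not> 0 < ?H"
        then have "Qc ^ (degree c + degree b + degree (1::'a poly)) * ?H \<le> 0"
          using Qc1 by (simp add: mult_nonneg_nonpos less_imp_le)
        with conjunct2[OF mn] have "fabs (poly_to_fls (cf_den A n * cf_den A (n + 1))) \<le> 0" by (rule order_trans)
        moreover have "0 < Qc ^ degree b * ?B" using B0 Qc1 by simp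
        ultimately show False using Beq by simp
      qed
      have "?B \<le> Qc ^ degree b * ?B" using QB B0 by simp
      also have "\<dots> \<le> Qc ^ (degree c + degree b) * ?H" using mn Beq by simp
      also have "\<dots> \<le> Qc ^ M * ?H"
      proof (rule mult_right_mono)
        show "Qc ^ (degree c + degree b) \<le> Qc ^ M" using Qc1 by (auto simp: M_def intro: power_increasing)
        show "0 \<le> ?H" using Hpos by simp
      qed
      finally have H2: "?B \<le> Qc ^ M * ?H" .
      have "0 \<le> ?H" using Hpos by simp
      then show "let A = cf_word a n c [b]; H = height (cf_value A); B = fabs (poly_to_fls (cf_den A n)) ^ 2
         in \<bar>H\<bar> \<le> Qc ^ M * \<bar>B\<bar> \<and> \<bar>B\<bar> \<le> Qc ^ M * \<bar>H\<bar>"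
        using H1 H2 B0 unfolding A_def Let_def by simp
    qed
  next
    show "\<exists>C>0. \<forall>(n::nat) (m::nat) (a::nat \<Rightarrow> 'a poly).
      n \<ge> 1 \<and> m \<ge> 1 \<and> (\<forall>i. 1 \<le> i \<and> i \<le> n - 1 \<longrightarrow> degree (a i) \<ge> 1) \<longrightarrow>
      (let A = cf_word a n c (replicate m b @ [d]);
           H = height (cf_value A);
           B = fabs (poly_to_fls (cf_den A n * cf_den A (n + m + 1)))
       in \<bar>H\<bar> \<le> C * \<bar>B\<bar> \<and> \<bar>B\<bar> \<le> C * \<bar>H\<bar>)"
    proof (intro exI[of _ "Qc ^ M"] conjI Cpos allI impI)
      fix n m :: nat and a :: "nat \<Rightarrow> 'a poly"
      assume h: "n \<ge> 1 \<and> m \<ge> 1 \<and> (\<forall>i. 1 \<le> i \<and> i \<le> n - 1 \<longrightarrow> degree (a i) \<ge> 1)"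
      let ?W = "replicate m b @ [d]"
      have hW: "\<forall>w\<in>set ?W. 1 \<le> degree w" using assms by simp
      have hg: "\<forall>g l. scal g l (prodM ?W) \<longrightarrow> g dvd (b - d)" using case2 h by blast
      have vA: "valid (cf_word a n c ?W)" by (rule word_valid) (use h assms in auto)
      have len: "n + length ?W = n + m + 1" by simp
      show "let A = cf_word a n c ?W; H = height (cf_value A); B = fabs (poly_to_fls (cf_den A n * cf_den A (n + m + 1)))
         in \<bar>H\<bar> \<le> Qc ^ M * \<bar>B\<bar> \<and> \<bar>B\<bar> \<le> Qc ^ M * \<bar>H\<bar>"
        unfolding Let_def
        apply (rule fin_gen[where K = "degree c + degree d + degree (b - d)"])
        using main[of n a c ?W "b - d"] h assms hW hg bd0 unfolding len Qc_def apply auto[2]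
        using pos[OF vA] apply simp
        using dbd apply (simp add: M_def)
        using Qc1 by (simp add: Qc_def)
    qed
  next
    show "\<exists>C>0. \<forall>(n::nat) (m::nat) (l::nat) (a::nat \<Rightarrow> 'a poly).
      n \<ge> 1 \<and> m \<ge> 1 \<and> l \<ge> 1 \<and> (\<forall>i. 1 \<le> i \<and> i \<le> n - 1 \<longrightarrow> degree (a i) \<ge> 1) \<longrightarrow>
      (let A = cf_word a n c (replicate m b @ [c] @ replicate l b);
           H = height (cf_value A);
           B = fabs (poly_to_fls (cf_den A n * cf_den A (n + m + l + 1)))
       in \<bar>H\<bar> \<le> C * \<bar>B\<bar> \<and> \<bar>B\<bar> \<le> C * \<bar>H\<bar>)"
    proof (intro exI[of _ "Qc ^ M"] conjI Cpos allI impI)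
      fix n m l :: nat and a :: "nat \<Rightarrow> 'a poly"
      assume h: "n \<ge> 1 \<and> m \<ge> 1 \<and> l \<ge> 1 \<and> (\<forall>i. 1 \<le> i \<and> i \<le> n - 1 \<longrightarrow> degree (a i) \<ge> 1)"
      let ?W = "replicate m b @ [c] @ replicate l b"
      have hW: "\<forall>w\<in>set ?W. 1 \<le> degree w" using assms by auto
      have hg: "\<forall>g k. scal g k (prodM ?W) \<longrightarrow> g dvd (b - c)" using case3 h by blast
      have lastW: "last ?W = b" using h by simp
      have vA: "valid (cf_word a n c ?W)" by (rule word_valid) (use h assms hW in auto)
      have len: "n + length ?W = n + m + l + 1" by simp
      show "let A = cf_word a n c ?W; H = height (cf_value A); B = fabs (poly_to_fls (cf_den A n * cf_den A (n + m + l + 1)))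
         in \<bar>H\<bar> \<le> Qc ^ M * \<bar>B\<bar> \<and> \<bar>B\<bar> \<le> Qc ^ M * \<bar>H\<bar>"
        unfolding Let_def
        apply (rule fin_gen[where K = "degree c + degree b + degree (b - c)"])
        using main[of n a c ?W "b - c"] h assms hW hg bc0 lastW unfolding len Qc_def apply auto[2]
        using pos[OF vA] apply simp
        using dbc apply (simp add: M_def)
        using Qc1 by (simp add: Qc_def)
    qed
  next
    show "\<exists>C>0. \<forall>(n::nat) (m::nat) (l::nat) (a::nat \<Rightarrow> 'a poly).
      n \<ge> 1 \<and> m \<ge> 1 \<and> l \<ge> 1 \<and> (\<forall>i. 1 \<le> i \<and> i \<le> n - 1 \<longrightarrow> degree (a i) \<ge> 1) \<longrightarrow>
      (let A = cf_word a n c (concat (replicate m [b, d]) @ [c] @ concat (replicate l [b, d]));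
           H = height (cf_value A);
           B = fabs (poly_to_fls (cf_den A n * cf_den A (n + 2 * m + 2 * l + 1)))
       in \<bar>H\<bar> \<le> C * \<bar>B\<bar> \<and> \<bar>B\<bar> \<le> C * \<bar>H\<bar>)"
    proof (intro exI[of _ "Qc ^ M"] conjI Cpos allI impI)
      fix n m l :: nat and a :: "nat \<Rightarrow> 'a poly"
      assume h: "n \<ge> 1 \<and> m \<ge> 1 \<and> l \<ge> 1 \<and> (\<forall>i. 1 \<le> i \<and> i \<le> n - 1 \<longrightarrow> degree (a i) \<ge> 1)"
      let ?W = "concat (replicate m [b, d]) @ [c] @ concat (replicate l [b, d])"
      have sW: "set ?W \<subseteq> {b, c, d}" by auto
      have hW: "\<forall>w\<in>set ?W. 1 \<le> degree w" using sW assms by blast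
      have hg: "\<forall>g k. scal g k (prodM ?W) \<longrightarrow> g dvd (b - d)" using case4 h by blast
      have lastW: "last ?W = d"
      proof -
        obtain l' where "l = Suc l'" using h by (cases l) auto
        then show ?thesis by (simp add: replicate_append_same[symmetric])
      qed
      have vA: "valid (cf_word a n c ?W)" by (rule word_valid) (use h assms hW in auto)
      have len: "n + length ?W = n + 2 * m + 2 * l + 1" by (simp add: length_concat sum_list_replicate)
      show "let A = cf_word a n c ?W; H = height (cf_value A); B = fabs (poly_to_fls (cf_den A n * cf_den A (n + 2 * m + 2 * l + 1)))
         in \<bar>H\<bar> \<le> Qc ^ M * \<bar>B\<bar> \<and> \<bar>B\<bar> \<le> Qc ^ M * \<bar>H\<bar>"
        unfolding Let_def
        apply (rule fin_gen[where K = "degree c + degree d + degree (b - d)"])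
        using main[of n a c ?W "b - d"] h assms hW hg bd0 lastW unfolding len Qc_def apply auto[2]
        using pos[OF vA] apply simp
        using dbd apply (simp add: M_def)
        using Qc1 by (simp add: Qc_def)
    qed
  qed
qed

end
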